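(* Let $\check\eta\in\overline{\mathscr{A}}^{\bullet}_{-,n}$, let $J\subsetneq I_{\mathrm{aff}}$ be such that the parabolic subgroup $(\widetilde W_{\mathrm{aff}})_J$ generated by $\{s_j\}_{j\in J}$ equals the stabilizer of $\check\eta$ under the dot action of $\widetilde W_{\mathrm{aff}}$, let $\sigma\in W\cap{}^J\widetilde W_{\mathrm{aff}}$, and set $\check\mu=\check\eta\bullet\sigma$. Then for every $i\in I$: (1) if $\sigma s_i\in{}^J\widetilde W_{\mathrm{aff}}$ and $\sigma s_i>\sigma$, then $-n(\check a_i)<\langle\check\mu+\check\rho,a_i\rangle<0$; (2) if $\sigma s_i\in{}^J\widetilde W_{\mathrm{aff}}$ and $\sigma s_i<\sigma$, then $0<\langle\check\mu+\check\rho,a_i\rangle<n(\check a_i)$; (3) $\sigma s_i\notin{}^J\widetilde W_{\mathrm{aff}}$ if and only if $\langle\check\mu+\check\rho,a_i\rangle=0$.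
   Context: Let $(Y,\{\check a_i\}_{i\in I},X,\{a_i\}_{i\in I})$ be a root datum with finite-type Cartan matrix ($\langle\check a_i,a_j\rangle=a_{ij}$), roots $\mathscr{R}$, positive roots $\mathscr{R}_+$, $\check\rho$ half the sum of positive coroots, Weyl group $W$ acting on the right on $V=Y\otimes\mathbb{R}$. Fix $n\ge1$ and a $W$-invariant quadratic form $\mathsf{Q}$ on $Y$, with $\mathsf{B}(y,z)=\mathsf{Q}(y+z)-\mathsf{Q}(y)-\mathsf{Q}(z)$; $n(\check a)$ is the smallest positive integer with $n(\check a)\mathsf{Q}(\check a)\equiv0\bmod n$. The twisted root datum has $\tilde Y=\{y\in Y:\mathsf{B}(y,z)\in n\mathbb{Z}\ \forall z\in Y\}$, simple coroots $\tilde a^\vee_i=n(\check a_i)\check a_i$ and simple roots $\tilde a_i=n(\check a_i)^{-1}a_i$ (with twisted roots $\tilde a=n(\check a)^{-1}a$, coroots $\tilde a^\vee=n(\check a)\check a$); standing assumption: it is simply connected ($\tilde Y$ has basis $\{\tilde a_i^\vee\}$). The affine Weyl group $\widetilde W_{\mathrm{aff}}\cong W\ltimes\tilde Y$ is generated by affine reflections $\sigma_{\tilde a,k}$ ($\tilde a$ a twisted root, $k\in\mathbb{Z}$); it is a Coxeter group with simple reflections $s_i=\sigma_{\tilde a_i,0}$ ($i\in I$) and $s_0=\sigma_{\tilde\theta,1}$, $\tilde\theta$ the highest root of the twisted root system, $I_{\mathrm{aff}}=I\sqcup\{0\}$; length, Bruhat order $<$ and parabolic subgroups refer to this Coxeter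 structure, and $W=\langle s_i:i\in I\rangle$. It acts on the right on $V$ by the dot action $x\bullet\sigma_{\tilde a,k}=x-(\langle x+\check\rho,\tilde a\rangle-k)\tilde a^\vee$. For $J\subset I_{\mathrm{aff}}$, ${}^J\widetilde W_{\mathrm{aff}}=\{w:\ell(s_jw)>\ell(w)\ \forall j\in J\}$. Finally $\overline{\mathscr{A}}^{\bullet}_{-,n}=\{v\in V:-n(\check a)<\langle v+\check\rho,a\rangle\le0\ \forall a\in\mathscr{R}_+\}$. *)

theory Defs
  imports "HOL-Analysis.Analysis"
begin

text \<open>Model of the root datum: Y = X = int^'n (a free Z-module of finite rank with
 the standard perfect pairing), V = Y (x) R = real^'n.  The index set I is a finite
 type 'i; the coroots are cor i in Y, the roots are rt i in X.\<close>

definition ipair :: "int^'n \<Rightarrow> int^'n \<Rightarrow> int" where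
  "ipair y x = (\<Sum>k\<in>UNIV. y $ k * x $ k)"

definition rv :: "int^'n \<Rightarrow> real^'n" where
  "rv y = (\<chi> k. real_of_int (y $ k))"

definition finite_type_cartan :: "('i::finite \<Rightarrow> 'i \<Rightarrow> int) \<Rightarrow> bool" where
  "finite_type_cartan A \<longleftrightarrow>
     (\<forall>i. A i i = 2) \<and> (\<forall>i j. i \<noteq> j \<longrightarrow> A i j \<le> 0) \<and>
     (\<forall>i j. A i j = 0 \<longleftrightarrow> A j i = 0) \<and>
     (\<exists>d :: 'i \<Rightarrow> real. (\<forall>i. d i > 0) \<and> (\<forall>i j. d i * A i j = d j * A j i) \<and>
        (\<forall>x :: 'i \<Rightarrow> real. x \<noteq> (\<lambda>_. 0) \<longrightarrow>
            (\<Sum>i\<in>UNIV. \<Sum>j\<in>UNIV. x i * d i * of_int (A i j) * x j) > 0))"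

definition reflX :: "('i \<Rightarrow> int^'n) \<Rightarrow> ('i \<Rightarrow> int^'n) \<Rightarrow> 'i \<Rightarrow> int^'n \<Rightarrow> int^'n" where
  "reflX cor rt i a = a - ipair (cor i) a *s rt i"

definition reflY :: "('i \<Rightarrow> int^'n) \<Rightarrow> ('i \<Rightarrow> int^'n) \<Rightarrow> 'i \<Rightarrow> int^'n \<Rightarrow> int^'n" where
  "reflY cor rt i y = y - ipair y (rt i) *s cor i"

inductive_set rootpairs :: "('i \<Rightarrow> int^'n) \<Rightarrow> ('i \<Rightarrow> int^'n) \<Rightarrow> ((int^'n) \<times> (int^'n)) set"
  for cor rt where
  simple: "(rt i, cor i) \<in> rootpairs cor rt"
| refl: "(a, c) \<in> rootpairs cor rt \<Longrightarrow> (reflX cor rt i a, reflY cor rt i c) \<in> rootpairs cor rt"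

definition roots :: "('i \<Rightarrow> int^'n) \<Rightarrow> ('i \<Rightarrow> int^'n) \<Rightarrow> (int^'n) set" where
  "roots cor rt = fst ` rootpairs cor rt"

definition coroot :: "('i \<Rightarrow> int^'n) \<Rightarrow> ('i \<Rightarrow> int^'n) \<Rightarrow> int^'n \<Rightarrow> int^'n" where
  "coroot cor rt a = (THE c. (a, c) \<in> rootpairs cor rt)"

definition pos_roots :: "('i::finite \<Rightarrow> int^'n) \<Rightarrow> ('i \<Rightarrow> int^'n) \<Rightarrow> (int^'n) set" where
  "pos_roots cor rt = {a \<in> roots cor rt. \<exists>m :: 'i \<Rightarrow> nat. a = (\<Sum>i\<in>UNIV. int (m i) *s rt i)}"

definition rhoc :: "('i::finite \<Rightarrow> int^'n) \<Rightarrow> ('i \<Rightarrow> int^'n) \<Rightarrow> real^'n" where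
  "rhoc cor rt = (1/2) *\<^sub>R (\<Sum>a\<in>pos_roots cor rt. rv (coroot cor rt a))"

definition Bf :: "(int^'n \<Rightarrow> int) \<Rightarrow> int^'n \<Rightarrow> int^'n \<Rightarrow> int" where
  "Bf Q y z = Q (y + z) - Q y - Q z"

definition quadratic_form :: "(int^'n \<Rightarrow> int) \<Rightarrow> bool" where
  "quadratic_form Q \<longleftrightarrow> (\<forall>k y. Q (k *s y) = k^2 * Q y) \<and>
     (\<forall>y y' z. Bf Q (y + y') z = Bf Q y z + Bf Q y' z) \<and>
     (\<forall>y z z'. Bf Q y (z + z') = Bf Q y z + Bf Q y z')"

definition W_invariant :: "('i \<Rightarrow> int^'n) \<Rightarrow> ('i \<Rightarrow> int^'n) \<Rightarrow> (int^'n \<Rightarrow> int) \<Rightarrow> bool" where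
  "W_invariant cor rt Q \<longleftrightarrow> (\<forall>i y. Q (reflY cor rt i y) = Q y)"

definition nQ :: "(int^'n \<Rightarrow> int) \<Rightarrow> nat \<Rightarrow> int^'n \<Rightarrow> nat" where
  "nQ Q n c = (LEAST m :: nat. 0 < m \<and> int n dvd int m * Q c)"

definition Ytil :: "(int^'n \<Rightarrow> int) \<Rightarrow> nat \<Rightarrow> (int^'n) set" where
  "Ytil Q n = {y. \<forall>z. int n dvd Bf Q y z}"

definition tw_scor :: "('i \<Rightarrow> int^'n) \<Rightarrow> (int^'n \<Rightarrow> int) \<Rightarrow> nat \<Rightarrow> 'i \<Rightarrow> int^'n" where
  "tw_scor cor Q n i = int (nQ Q n (cor i)) *s cor i"

definition simply_connected :: "('i::finite \<Rightarrow> int^'n) \<Rightarrow> (int^'n \<Rightarrow> int) \<Rightarrow> nat \<Rightarrow> bool" where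
  "simply_connected cor Q n \<longleftrightarrow>
     Ytil Q n = {(\<Sum>i\<in>UNIV. k i *s tw_scor cor Q n i) | k. True} \<and>
     (\<forall>k. (\<Sum>i\<in>UNIV. k i *s tw_scor cor Q n i) = 0 \<longrightarrow> (\<forall>i. k i = 0))"

definition tw_root :: "('i \<Rightarrow> int^'n) \<Rightarrow> ('i \<Rightarrow> int^'n) \<Rightarrow> (int^'n \<Rightarrow> int) \<Rightarrow> nat \<Rightarrow> int^'n \<Rightarrow> real^'n" where
  "tw_root cor rt Q n a = (1 / real (nQ Q n (coroot cor rt a))) *\<^sub>R rv a"

definition tw_coroot :: "('i \<Rightarrow> int^'n) \<Rightarrow> ('i \<Rightarrow> int^'n) \<Rightarrow> (int^'n \<Rightarrow> int) \<Rightarrow> nat \<Rightarrow> int^'n \<Rightarrow> real^'n" where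
  "tw_coroot cor rt Q n a = real (nQ Q n (coroot cor rt a)) *\<^sub>R rv (coroot cor rt a)"

definition tw_sroot :: "('i \<Rightarrow> int^'n) \<Rightarrow> ('i \<Rightarrow> int^'n) \<Rightarrow> (int^'n \<Rightarrow> int) \<Rightarrow> nat \<Rightarrow> 'i \<Rightarrow> real^'n" where
  "tw_sroot cor rt Q n i = (1 / real (nQ Q n (cor i))) *\<^sub>R rv (rt i)"

definition tw_scoroot :: "('i \<Rightarrow> int^'n) \<Rightarrow> (int^'n \<Rightarrow> int) \<Rightarrow> nat \<Rightarrow> 'i \<Rightarrow> real^'n" where
  "tw_scoroot cor Q n i = rv (tw_scor cor Q n i)"

definition tw_highest :: "('i::finite \<Rightarrow> int^'n) \<Rightarrow> ('i \<Rightarrow> int^'n) \<Rightarrow> (int^'n \<Rightarrow> int) \<Rightarrow> nat \<Rightarrow> int^'n \<Rightarrow> bool" where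
  "tw_highest cor rt Q n theta \<longleftrightarrow> theta \<in> roots cor rt \<and>
     (\<forall>a\<in>roots cor rt. \<exists>m :: 'i \<Rightarrow> nat.
        tw_root cor rt Q n theta - tw_root cor rt Q n a = (\<Sum>i\<in>UNIV. real (m i) *\<^sub>R tw_sroot cor rt Q n i))"

definition aff_refl :: "real^'n \<Rightarrow> real^'n \<Rightarrow> real^'n \<Rightarrow> int \<Rightarrow> real^'n \<Rightarrow> real^'n" where
  "aff_refl rho al alv k x = x - ((x + rho) \<bullet> al - of_int k) *\<^sub>R alv"

text \<open>Simple reflections of the affine Weyl group, indexed by I_aff = 'i option
 (None is the affine node 0), as maps V -> V via the dot action.\<close>
definition gen :: "('i::finite \<Rightarrow> int^'n) \<Rightarrow> ('i \<Rightarrow> int^'n) \<Rightarrow> (int^'n \<Rightarrow> int) \<Rightarrow> nat \<Rightarrow> int^'n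
     \<Rightarrow> 'i option \<Rightarrow> real^'n \<Rightarrow> real^'n" where
  "gen cor rt Q n theta j = (case j of
       None \<Rightarrow> aff_refl (rhoc cor rt) (tw_root cor rt Q n theta) (tw_coroot cor rt Q n theta) 1
     | Some i \<Rightarrow> aff_refl (rhoc cor rt) (tw_sroot cor rt Q n i) (tw_scoroot cor Q n i) 0)"

text \<open>Elements of the group are represented by their (right) dot action on V:
 x . (s_j1 ... s_jk) = (...(x . s_j1) ...) . s_jk.  Hence the product u w is w o u.\<close>
definition word_map :: "('i::finite \<Rightarrow> int^'n) \<Rightarrow> ('i \<Rightarrow> int^'n) \<Rightarrow> (int^'n \<Rightarrow> int) \<Rightarrow> nat \<Rightarrow> int^'n
     \<Rightarrow> 'i option list \<Rightarrow> real^'n \<Rightarrow> real^'n" where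
  "word_map cor rt Q n theta ws = fold (gen cor rt Q n theta) ws"

definition gmult :: "('a \<Rightarrow> 'a) \<Rightarrow> ('a \<Rightarrow> 'a) \<Rightarrow> 'a \<Rightarrow> 'a" where
  "gmult u w = w \<circ> u"

definition Waff where
  "Waff cor rt Q n theta = range (word_map cor rt Q n theta)"

definition Wfin where
  "Wfin cor rt Q n theta = {word_map cor rt Q n theta ws | ws. set ws \<subseteq> range Some}"

definition parabolic where
  "parabolic cor rt Q n theta J = {word_map cor rt Q n theta ws | ws. set ws \<subseteq> J}"

definition stabilizer where
  "stabilizer cor rt Q n theta x = {w \<in> Waff cor rt Q n theta. w x = x}"

definition len where
  "len cor rt Q n theta w = (LEAST l. \<exists>ws. length ws = l \<and> word_map cor rt Q n theta ws = w)"

definition min_reps where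
  "min_reps cor rt Q n theta J = {w \<in> Waff cor rt Q n theta.
      \<forall>j\<in>J. len cor rt Q n theta (gmult (gen cor rt Q n theta j) w) > len cor rt Q n theta w}"

definition reflections where
  "reflections cor rt Q n theta = {word_map cor rt Q n theta (ws @ [j] @ rev ws) | ws j. True}"

definition bruhat_less where
  "bruhat_less cor rt Q n theta u w \<longleftrightarrow>
     (u, w) \<in> {(x, gmult x t) | x t. x \<in> Waff cor rt Q n theta \<and> t \<in> reflections cor rt Q n theta \<and>
                 len cor rt Q n theta x < len cor rt Q n theta (gmult x t)}\<^sup>+"

definition alcove_minus where
  "alcove_minus cor rt Q n = {v :: real^'n. \<forall>a\<in>pos_roots cor rt.
      - real (nQ Q n (coroot cor rt a)) < (v + rhoc cor rt) \<bullet> rv a \<and> (v + rhoc cor rt) \<bullet> rv a \<le> 0}"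

end

theory Submission
  imports Defs
begin

locale cartanA =
  fixes A :: "'i::finite \<Rightarrow> 'i \<Rightarrow> int"
  assumes diag: "A i i = 2"
    and offd: "i \<noteq> j \<Longrightarrow> A i j \<le> 0"
    and zsym: "A i j = 0 \<longleftrightarrow> A j i = 0"
    and prod4: "i \<noteq> j \<Longrightarrow> A i j * A j i < 4"
begin

definition sr :: "'i \<Rightarrow> ('i \<Rightarrow> int) \<Rightarrow> ('i \<Rightarrow> int)" where
  "sr i l = l(i := l i - (\<Sum>k\<in>UNIV. A i k * l k))"

fun wm :: "'i list \<Rightarrow> ('i \<Rightarrow> int) \<Rightarrow> ('i \<Rightarrow> int)" where
  "wm [] = id" | "wm (i#ws) = sr i \<circ> wm ws"

definition ev :: "'i \<Rightarrow> 'i \<Rightarrow> int" where "ev s = (\<lambda>k. if k = s then 1 else 0)"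

lemma sum_upd: "(\<Sum>k\<in>UNIV. (f k::int) * ((l::'i\<Rightarrow>int)(i:=v)) k) = (\<Sum>k\<in>UNIV. f k * l k) + f i * (v - l i)"
proof -
  have "(\<Sum>k\<in>UNIV. f k * (l(i:=v)) k) = (\<Sum>k\<in>UNIV. f k * l k + (if k = i then f i * (v - l i) else 0))"
    by (rule sum.cong) (auto simp: algebra_simps)
  also have "\<dots> = (\<Sum>k\<in>UNIV. f k * l k) + f i * (v - l i)"
    by (simp add: sum.distrib)
  finally show ?thesis .
qed

lemma sum_sr: "(\<Sum>k\<in>UNIV. f k * sr i l k) = (\<Sum>k\<in>UNIV. f k * l k) - f i * (\<Sum>k\<in>UNIV. A i k * l k)"
  unfolding sr_def by (simp only: sum_upd) (simp add: algebra_simps)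

lemma sr_sr[simp]: "sr i (sr i l) = l"
proof -
  have "(\<Sum>k\<in>UNIV. A i k * sr i l k) = - (\<Sum>k\<in>UNIV. A i k * l k)"
    by (simp add: sum_sr diag)
  then show ?thesis by (intro ext) (simp add: sr_def)
qed

lemma sr_sr_comp[simp]: "sr i \<circ> sr i = id"
  by (rule ext) simp

lemma wm_append: "wm (xs @ ys) = wm xs \<circ> wm ys"
  by (induction xs) auto

lemma sr_add: "sr i (\<lambda>k. l k + m k) = (\<lambda>k. sr i l k + sr i m k)"
  by (rule ext) (simp add: sr_def sum.distrib algebra_simps)

lemma sr_smult: "sr i (\<lambda>k. c * l k) = (\<lambda>k. c * sr i l k)"
  by (rule ext) (simp add: sr_def sum_distrib_left algebra_simps)

lemma wm_add: "wm ws (\<lambda>k. l k + m k) = (\<lambda>k. wm ws l k + wm ws m k)"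
  by (induction ws) (auto simp: sr_add)

lemma wm_smult: "wm ws (\<lambda>k. c * l k) = (\<lambda>k. c * wm ws l k)"
  by (induction ws) (auto simp: sr_smult)

lemma wm_lin: "wm ws (\<lambda>k. p * l k + q * m k) = (\<lambda>k. p * wm ws l k + q * wm ws m k)"
  by (simp add: wm_add wm_smult)

lemma wm_rev_inv: "wm (rev ws) \<circ> wm ws = id"
proof (induction ws)
  case Nil then show ?case by simp
next
  case (Cons i ws)
  have "wm (rev (i#ws)) \<circ> wm (i#ws) = wm (rev ws) \<circ> wm ws"
    by (rule ext) (simp add: wm_append)
  also have "\<dots> = id" by (rule Cons.IH)
  finally show ?case .
qed

lemma wm_inv_rev: "wm ws \<circ> wm (rev ws) = id"
  using wm_rev_inv[of "rev ws"] by simp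

definition len :: "(('i\<Rightarrow>int) \<Rightarrow> ('i\<Rightarrow>int)) \<Rightarrow> nat" where
  "len f = (LEAST l. \<exists>ws. length ws = l \<and> wm ws = f)"

definition lenI :: "'i \<Rightarrow> 'i \<Rightarrow> (('i\<Rightarrow>int) \<Rightarrow> ('i\<Rightarrow>int)) \<Rightarrow> nat" where
  "lenI s t f = (LEAST l. \<exists>ws. set ws \<subseteq> {s,t} \<and> length ws = l \<and> wm ws = f)"

lemma len_le: "wm ws = f \<Longrightarrow> len f \<le> length ws"
  unfolding len_def by (rule Least_le) auto

lemma len_ex: "wm vs = f \<Longrightarrow> \<exists>ws. length ws = len f \<and> wm ws = f"
  unfolding len_def by (rule LeastI_ex) auto

lemma lenI_le: "set ws \<subseteq> {s,t} \<Longrightarrow> wm ws = f \<Longrightarrow> lenI s t f \<le> length ws"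
  unfolding lenI_def by (rule Least_le) auto

lemma lenI_ex: "set vs \<subseteq> {s,t} \<Longrightarrow> wm vs = f \<Longrightarrow> \<exists>ws. set ws \<subseteq> {s,t} \<and> length ws = lenI s t f \<and> wm ws = f"
  unfolding lenI_def by (rule LeastI_ex) auto

lemma len_le_lenI: "set vs \<subseteq> {s,t} \<Longrightarrow> wm vs = f \<Longrightarrow> len f \<le> lenI s t f"
  using lenI_ex len_le by metis

lemma len_comp: "wm xs = f \<Longrightarrow> wm ys = g \<Longrightarrow> len (f \<circ> g) \<le> len f + len g"
proof -
  assume "wm xs = f" "wm ys = g"
  then obtain xs' ys' where "length xs' = len f" "wm xs' = f" "length ys' = len g" "wm ys' = g"
    using len_ex by metis
  then have "wm (xs' @ ys') = f \<circ> g" by (simp add: wm_append)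
  then have "len (f \<circ> g) \<le> length (xs' @ ys')" by (rule len_le)
  then show ?thesis using \<open>length xs' = len f\<close> \<open>length ys' = len g\<close> by simp
qed


section \<open>Rank two\<close>

fun alt :: "'i \<Rightarrow> 'i \<Rightarrow> nat \<Rightarrow> 'i list" where
  "alt x y 0 = []" | "alt x y (Suc k) = alt y x k @ [x]"

lemma alt_len[simp]: "length (alt x y k) = k"
  by (induction k arbitrary: x y) auto

lemma alt_set: "set (alt x y k) \<subseteq> {x,y}"
  by (induction k arbitrary: x y) auto

lemma alt_split: "alt x y (j + k) = alt (if even k then x else y) (if even k then y else x) j @ alt x y k"
  by (induction k arbitrary: x y) auto

fun nd :: "'a list \<Rightarrow> bool" where
  "nd (x#y#r) = (x \<noteq> y \<and> nd (y#r))" | "nd _ = True"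

lemma nd_snoc: "nd (ys @ [a]) \<longleftrightarrow> nd ys \<and> (ys = [] \<or> last ys \<noteq> a)"
  by (induction ys rule: nd.induct) auto

lemma not_nd: "\<not> nd zs \<Longrightarrow> \<exists>us y vs. zs = us @ [y,y] @ vs"
proof (induction zs rule: nd.induct)
  case (1 x y r)
  show ?case
  proof (cases "x = y")
    case True then show ?thesis by (rule_tac x="[]" in exI) auto
  next
    case False
    with 1 obtain us z vs where "y#r = us @ [z,z] @ vs" by auto
    then show ?thesis by (rule_tac x="x#us" in exI) auto
  qed
qed auto

lemma alt_char: "s \<noteq> t \<Longrightarrow> set zs \<subseteq> {s,t} \<Longrightarrow> nd zs \<Longrightarrow> (zs = [] \<or> last zs = t) \<Longrightarrow> zs = alt t s (length zs)"
proof (induction zs arbitrary: s t rule: rev_induct)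
  case Nil then show ?case by simp
next
  case (snoc x xs)
  then have xt: "x = t" by simp
  have "nd xs" "xs = [] \<or> last xs \<noteq> x" using snoc.prems(3) nd_snoc[of xs x] by auto
  moreover have "set xs \<subseteq> {s,t}" using snoc.prems(2) by simp
  then have "xs \<noteq> [] \<Longrightarrow> last xs \<in> {s,t}" using last_in_set[of xs] by blast
  ultimately have "xs = [] \<or> last xs = s" using xt by blast
  then have "xs = alt s t (length xs)" using snoc.IH[of t s] snoc.prems \<open>nd xs\<close> by auto
  then show ?case using xt by simp
qed

definition Pf :: "'i \<Rightarrow> ('i \<Rightarrow> int) \<Rightarrow> int" where "Pf s l = (\<Sum>k\<in>UNIV. A s k * l k)"

definition gv :: "'i \<Rightarrow> 'i \<Rightarrow> ('i \<Rightarrow> int) \<Rightarrow> int \<Rightarrow> int \<Rightarrow> ('i \<Rightarrow> int)" where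
  "gv s t l x y = (\<lambda>k. l k + x * ev s k + y * ev t k)"

lemma sum_ev: "(\<Sum>k\<in>UNIV. (f k::int) * ev s k) = f s"
proof -
  have "(\<Sum>k\<in>UNIV. (f k::int) * ev s k) = (\<Sum>k\<in>UNIV. if k = s then f k else 0)"
    by (rule sum.cong) (auto simp: ev_def)
  then show ?thesis by simp
qed

lemma Pf_gv: "Pf u (gv s t l x y) = Pf u l + x * A u s + y * A u t"
proof -
  have "Pf u (gv s t l x y) = (\<Sum>k\<in>UNIV. A u k * l k + (x * A u k) * ev s k + (y * A u k) * ev t k)"
    unfolding Pf_def gv_def by (rule sum.cong) (auto simp: algebra_simps)
  also have "\<dots> = Pf u l + x * A u s + y * A u t"
    by (simp add: sum.distrib sum_ev Pf_def)
  finally show ?thesis .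
qed

lemma sr_gv_s: "s \<noteq> t \<Longrightarrow> sr s (gv s t l x y) = gv s t l (- x - Pf s l - A s t * y) y"
  unfolding sr_def
  apply (rule ext)
  subgoal for k
    using Pf_gv[of s s t l x y, unfolded Pf_def] diag[of s]
    by (auto simp: gv_def ev_def algebra_simps Pf_def)
  done

lemma sr_gv_t: "s \<noteq> t \<Longrightarrow> sr t (gv s t l x y) = gv s t l x (- y - Pf t l - A t s * x)"
  unfolding sr_def
  apply (rule ext)
  subgoal for k
    using Pf_gv[of t s t l x y, unfolded Pf_def] diag[of t]
    by (auto simp: gv_def ev_def algebra_simps Pf_def)
  done

lemma gv0: "l = gv s t l 0 0"
  by (simp add: gv_def)


lemma ab_cases:
  assumes "s \<noteq> t"
  shows "(A s t = 0 \<and> A t s = 0) \<or> (A s t = -1 \<and> A t s = -1) \<or> (A s t = -1 \<and> A t s = -2) \<or>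
         (A s t = -2 \<and> A t s = -1) \<or> (A s t = -1 \<and> A t s = -3) \<or> (A s t = -3 \<and> A t s = -1)"
proof -
  have a0: "A s t \<le> 0" "A t s \<le> 0" using offd assms by auto
  have p: "A s t * A t s < 4" using prod4 assms by auto
  show ?thesis
  proof (cases "A s t = 0")
    case True then show ?thesis using zsym by auto
  next
    case False
    then have "A t s \<noteq> 0" using zsym by auto
    then have b1: "A s t \<le> -1" "A t s \<le> -1" using a0 False by auto
    have "A s t \<ge> -3"
    proof (rule ccontr)
      assume "\<not> A s t \<ge> -3"
      then have "(-A s t) * (-A t s) \<ge> 4 * 1" using b1 by (intro mult_mono) auto
      then show False using p by simp
    qed
    moreover have "A t s \<ge> -3"
    proof (rule ccontr)
      assume "\<not> A t s \<ge> -3"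
      then have "(-A s t) * (-A t s) \<ge> 1 * 4" using b1 by (intro mult_mono) auto
      then show False using p by simp
    qed
    ultimately have "A s t \<in> {-3,-2,-1}" "A t s \<in> {-3,-2,-1}" using b1 by auto
    then show ?thesis using p by auto
  qed
qed

definition mm :: "'i \<Rightarrow> 'i \<Rightarrow> nat" where
  "mm s t = (if A s t = 0 then 2 else if A s t * A t s = 1 then 3 else if A s t * A t s = 2 then 4 else 6)"

lemma Pf_zero: "Pf u (\<lambda>_. 0) = 0" by (simp add: Pf_def)

lemma braid:
  assumes st: "s \<noteq> t"
  shows "wm (alt t s (mm s t)) = wm (alt s t (mm s t))"
proof (rule ext)
  fix l
  have L: "l = gv s t l 0 0" by (rule gv0)
  from ab_cases[OF st] show "wm (alt t s (mm s t)) l = wm (alt s t (mm s t)) l"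
    apply (elim disjE conjE)
    by (subst (1 2) L, simp add: mm_def eval_nat_numeral wm_append sr_gv_s[OF st] sr_gv_t[OF st],
        (rule arg_cong2[where f="gv s t l"]; simp add: algebra_simps)?)+
qed

lemma gv_ex: "0 \<le> p \<Longrightarrow> 0 \<le> q \<Longrightarrow> (\<exists>p' q'. gv s t z p q = gv s t z p' q' \<and> 0 \<le> p' \<and> 0 \<le> q') = True"
  by auto

lemma expl:
  assumes st: "s \<noteq> t" and k: "k < mm s t"
  shows "\<exists>p q. wm (alt t s k) (ev s) = gv s t (\<lambda>_. 0) p q \<and> p \<ge> 0 \<and> q \<ge> 0"
proof -
  have E: "ev s = gv s t (\<lambda>_. 0) 1 0" by (rule ext) (simp add: gv_def)
  have k6: "k = 0 \<or> k = 1 \<or> k = 2 \<or> k = 3 \<or> k = 4 \<or> k = 5" using k by (auto simp: mm_def split: if_splits)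
  from ab_cases[OF st] k6 k show ?thesis
    apply (elim disjE conjE)
    by (simp_all add: E mm_def eval_nat_numeral wm_append sr_gv_s[OF st] sr_gv_t[OF st] Pf_zero gv_ex)
qed


lemma wm_pair[simp]: "wm [y,y] = id"
  by (simp add: fun_eq_iff)

lemma rank2:
  assumes st: "s \<noteq> t" and xs: "set xs \<subseteq> {s,t}" and le: "lenI s t (wm xs) \<le> lenI s t (wm xs \<circ> sr s)"
  shows "\<exists>p q. wm xs (ev s) = gv s t (\<lambda>_. 0) p q \<and> p \<ge> 0 \<and> q \<ge> 0"
proof -
  obtain zs where zs: "set zs \<subseteq> {s,t}" "length zs = lenI s t (wm xs)" "wm zs = wm xs"
    using lenI_ex[OF xs HOL.refl] by blast
  have nd: "nd zs"
  proof (rule ccontr)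
    assume "\<not> nd zs"
    then obtain us y vs where u: "zs = us @ [y,y] @ vs" using not_nd by blast
    have "wm (us @ vs) = wm zs" by (simp only: u wm_append wm_pair id_comp)
    moreover have "set (us @ vs) \<subseteq> {s,t}" using zs(1) u by auto
    ultimately have "lenI s t (wm xs) \<le> length (us @ vs)" using lenI_le zs(3) by metis
    then show False using zs(2) u by simp
  qed
  have lastt: "zs = [] \<or> last zs = t"
  proof (rule ccontr)
    assume a: "\<not> (zs = [] \<or> last zs = t)"
    then have "last zs \<in> {s,t}" using zs(1) last_in_set[of zs] by blast
    then have "zs \<noteq> []" "last zs = s" using a by auto
    then obtain us where u: "zs = us @ [s]" by (metis append_butlast_last_id)
    have "wm xs \<circ> sr s = wm us" using u zs(3)[symmetric] by (auto simp: wm_append fun_eq_iff)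
    moreover have "set us \<subseteq> {s,t}" using zs(1) u by auto
    ultimately have "lenI s t (wm xs \<circ> sr s) \<le> length us" using lenI_le by metis
    then show False using le zs(2) u by simp
  qed
  have za: "zs = alt t s (length zs)" using alt_char[OF st zs(1) nd lastt] .
  have km: "length zs < mm s t"
  proof (rule ccontr)
    assume "\<not> length zs < mm s t"
    then obtain j where j: "length zs = j + mm s t" by (metis le_add_diff_inverse2 not_less)
    have mm1: "mm s t = Suc (mm s t - 1)" by (simp add: mm_def)
    define X where "X = (if even (mm s t) then t else s)"
    define Y where "Y = (if even (mm s t) then s else t)"
    have "zs = alt t s (j + mm s t)" using za j by simp
    also have "\<dots> = alt X Y j @ alt t s (mm s t)" unfolding X_def Y_def by (rule alt_split)
    finally have z1: "zs = alt X Y j @ alt t s (mm s t)" .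
    have "alt s t (mm s t) = alt t s (mm s t - 1) @ [s]" by (subst mm1) simp
    then have "wm zs = wm (alt X Y j @ alt t s (mm s t - 1)) \<circ> sr s"
      using z1 braid[OF st] by (simp add: wm_append comp_assoc)
    then have E: "wm (alt X Y j @ alt t s (mm s t - 1)) = wm xs \<circ> sr s"
      using zs(3) by (simp add: comp_assoc)
    have S: "set (alt X Y j @ alt t s (mm s t - 1)) \<subseteq> {s,t}"
      using alt_set[of X Y j] alt_set[of t s "mm s t - 1"] X_def Y_def by (auto split: if_splits)
    have "lenI s t (wm xs \<circ> sr s) \<le> length (alt X Y j @ alt t s (mm s t - 1))" using S E by (rule lenI_le)
    then have "lenI s t (wm xs \<circ> sr s) \<le> j + (mm s t - 1)" by simp
    then show False using le zs(2) j mm1 by linarith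
  qed
  obtain p q where "wm (alt t s (length zs)) (ev s) = gv s t (\<lambda>_. 0) p q" "p \<ge> 0" "q \<ge> 0"
    using expl[OF st km] by blast
  then show ?thesis using za zs(3) by auto
qed

lemma lenI_cons: "set xs \<subseteq> {s,t} \<Longrightarrow> u \<in> {s,t} \<Longrightarrow> lenI s t (sr u \<circ> wm xs) \<le> lenI s t (wm xs) + 1"
proof -
  assume xs: "set xs \<subseteq> {s,t}" and u: "u \<in> {s,t}"
  obtain xs' where xs': "set xs' \<subseteq> {s,t}" "length xs' = lenI s t (wm xs)" "wm xs' = wm xs"
    using lenI_ex[OF xs HOL.refl] by blast
  have "wm (u # xs') = sr u \<circ> wm xs" using xs' by simp
  moreover have "set (u # xs') \<subseteq> {s,t}" using xs' u by auto
  ultimately have "lenI s t (sr u \<circ> wm xs) \<le> length (u # xs')" using lenI_le by metis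
  then show ?thesis using xs' by simp
qed

lemma humph_aux:
  "\<forall>ws s. len (wm ws) = N \<longrightarrow> len (wm ws) \<le> len (wm ws \<circ> sr s) \<longrightarrow> (\<forall>k. wm ws (ev s) k \<ge> 0)"
proof (induction N rule: less_induct)
  case (less N)
  show ?case
  proof (rule allI, rule allI, rule impI, rule impI)
    fix ws s assume lN: "len (wm ws) = N" and le: "len (wm ws) \<le> len (wm ws \<circ> sr s)"
    define w where "w = wm ws"
    obtain ws0 where ws0: "length ws0 = N" "wm ws0 = w" using len_ex[of ws] lN w_def by metis
    show "\<forall>k. wm ws (ev s) k \<ge> 0"
    proof (cases "N = 0")
      case True then have "ws0 = []" using ws0 by simp
      then have "w = id" using ws0 by simp
      then show ?thesis by (simp add: w_def ev_def)
    next
      case False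
      then obtain ys t where ys: "ws0 = ys @ [t]" using ws0(1) by (metis rev_exhaust length_0_conv)
      have "w = wm ys \<circ> sr t" using ys ws0(2) by (simp add: wm_append)
      then have wys: "w \<circ> sr t = wm ys" by (simp add: comp_assoc)
      have lys: "length ys = N - 1" using ys ws0(1) by simp
      have st: "s \<noteq> t"
      proof
        assume "s = t"
        then have "len (w \<circ> sr s) \<le> N - 1" using wys lys len_le by metis
        then show False using le lN False w_def by simp
      qed
      define Aset where "Aset = {(v,x). (\<exists>vs. wm vs = v) \<and> (\<exists>xs. set xs \<subseteq> {s,t} \<and> wm xs = x) \<and> w = v \<circ> x \<and> len v + lenI s t x = N}"
      have lenN_le: "N \<le> len v + lenI s t x" if "wm vs = v" "set xs \<subseteq> {s,t}" "wm xs = x" "w = v \<circ> x" for v x vs xs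
      proof -
        have "N = len (v \<circ> x)" using lN w_def that by simp
        also have "\<dots> \<le> len v + len x" using len_comp that by metis
        also have "len x \<le> lenI s t x" using len_le_lenI that by metis
        finally show ?thesis by simp
      qed
      have in1: "(wm ys, sr t) \<in> Aset"
      proof -
        have "len (wm ys) \<le> N - 1" using len_le lys by metis
        moreover have "lenI s t (sr t) \<le> 1" using lenI_le[of "[t]" s t "sr t"] by simp
        moreover have wq: "w = wm ys \<circ> sr t" using ys ws0(2) by (simp add: wm_append)
        moreover have t1: "set [t] \<subseteq> {s,t}" "wm [t] = sr t" by auto
        moreover have "N \<le> len (wm ys) + lenI s t (sr t)"
          using lenN_le[of ys "wm ys" "[t]" "sr t"] wq t1 by blast
        ultimately have "len (wm ys) + lenI s t (sr t) = N" using False by linarith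
        then show ?thesis unfolding Aset_def using wq t1 by blast
      qed
      obtain vx where vx: "vx \<in> Aset" and vmin: "\<And>vx'. vx' \<in> Aset \<Longrightarrow> len (fst vx) \<le> len (fst vx')"
        using ex_has_least_nat[of "\<lambda>p. p \<in> Aset" "(wm ys, sr t)" "\<lambda>p. len (fst p)"] in1 by blast
      obtain v x where vxd: "vx = (v,x)" by fastforce
      obtain vs xs where vs: "wm vs = v" and xs: "set xs \<subseteq> {s,t}" "wm xs = x" and wvx: "w = v \<circ> x"
        and sumN: "len v + lenI s t x = N" using vx vxd unfolding Aset_def by auto
      have lvN: "len v < N"
      proof -
        have "len v \<le> len (wm ys)" using vmin[OF in1] vxd by simp
        also have "\<dots> \<le> N - 1" using len_le lys by metis
        finally show ?thesis using False by simp
      qed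
      have c1: "len v \<le> len (v \<circ> sr u)" if u: "u \<in> {s,t}" for u
      proof (rule ccontr)
        assume nle: "\<not> len v \<le> len (v \<circ> sr u)"
        have w1: "wm (vs @ [u]) = v \<circ> sr u" using vs by (simp add: wm_append)
        have w2: "wm (u # xs) = sr u \<circ> x" using xs by simp
        have w3: "w = (v \<circ> sr u) \<circ> (sr u \<circ> x)" using wvx by (auto simp: fun_eq_iff)
        have "lenI s t (sr u \<circ> x) \<le> lenI s t x + 1" using lenI_cons xs u by metis
        then have "len (v \<circ> sr u) + lenI s t (sr u \<circ> x) \<le> N" using nle sumN by linarith
        moreover have s2: "set (u # xs) \<subseteq> {s,t}" using xs u by auto
        moreover have "N \<le> len (v \<circ> sr u) + lenI s t (sr u \<circ> x)"
          using lenN_le[OF w1 s2 w2 w3] .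
        ultimately have "len (v \<circ> sr u) + lenI s t (sr u \<circ> x) = N" by linarith
        then have "(\<exists>vs'. wm vs' = v \<circ> sr u) \<and> (\<exists>xs'. set xs' \<subseteq> {s,t} \<and> wm xs' = sr u \<circ> x) \<and>
           w = (v \<circ> sr u) \<circ> (sr u \<circ> x) \<and> len (v \<circ> sr u) + lenI s t (sr u \<circ> x) = N"
          using w1 w2 w3 s2 by blast
        then have "(v \<circ> sr u, sr u \<circ> x) \<in> Aset" unfolding Aset_def by simp
        then have "len v \<le> len (v \<circ> sr u)" using vmin vxd by fastforce
        then show False using nle by simp
      qed
      have IH: "\<forall>k. wm vs (ev u) k \<ge> 0" if "u \<in> {s,t}" for u
        using less.IH[OF lvN, THEN spec[of _ vs], THEN spec[of _ u]] vs c1[OF that] by blast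
      have c3: "lenI s t x \<le> lenI s t (x \<circ> sr s)"
      proof (rule ccontr)
        assume nle: "\<not> lenI s t x \<le> lenI s t (x \<circ> sr s)"
        have xs2: "set (xs @ [s]) \<subseteq> {s,t}" "wm (xs @ [s]) = x \<circ> sr s" using xs by (auto simp: wm_append)
        have "len (w \<circ> sr s) = len (v \<circ> (x \<circ> sr s))" using wvx by (simp add: comp_assoc)
        also have "\<dots> \<le> len v + len (x \<circ> sr s)" using len_comp vs xs2 by metis
        also have "len (x \<circ> sr s) \<le> lenI s t (x \<circ> sr s)" using len_le_lenI xs2 by metis
        finally have "len (w \<circ> sr s) < N" using nle sumN by linarith
        then show False using le lN w_def by simp
      qed
      obtain p q where pq: "x (ev s) = gv s t (\<lambda>_. 0) p q" "p \<ge> 0" "q \<ge> 0"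
        using rank2[OF st xs(1)] c3 xs(2) by metis
      have "wm ws (ev s) = (v \<circ> x) (ev s)" using w_def wvx by simp
      also have "\<dots> = v (gv s t (\<lambda>_. 0) p q)" using pq(1) by simp
      also have "gv s t (\<lambda>_. 0) p q = (\<lambda>k. p * ev s k + q * ev t k)" by (simp add: gv_def)
      also have "v (\<lambda>k. p * ev s k + q * ev t k) = (\<lambda>k. p * v (ev s) k + q * v (ev t) k)"
        using wm_lin vs by metis
      finally have F: "wm ws (ev s) = (\<lambda>k. p * v (ev s) k + q * v (ev t) k)" .
      show ?thesis
      proof
        fix k
        have "v (ev s) k \<ge> 0" "v (ev t) k \<ge> 0" using IH vs by auto
        then show "wm ws (ev s) k \<ge> 0" using F pq by simp
      qed
    qed
  qed
qed

theorem humph: "len (wm ws) \<le> len (wm ws \<circ> sr s) \<Longrightarrow> wm ws (ev s) k \<ge> 0"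
  using humph_aux by blast

theorem coherent: "(\<forall>k. wm ws (ev s) k \<ge> 0) \<or> (\<forall>k. wm ws (ev s) k \<le> 0)"
proof (cases "len (wm ws) \<le> len (wm ws \<circ> sr s)")
  case True then show ?thesis using humph by blast
next
  case False
  have e: "wm (ws @ [s]) = wm ws \<circ> sr s" by (simp add: wm_append)
  have "len (wm (ws @ [s])) \<le> len (wm (ws @ [s]) \<circ> sr s)" using False e by (simp add: comp_assoc)
  then have "\<forall>k. wm (ws @ [s]) (ev s) k \<ge> 0" using humph by blast
  moreover have "sr s (ev s) = (\<lambda>k. (-1) * ev s k)"
  proof -
    have "(\<Sum>k\<in>UNIV. A s k * ev s k) = 2" using sum_ev[of "A s"] diag by simp
    then show ?thesis by (intro ext) (simp add: sr_def ev_def)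
  qed
  moreover have "wm (ws @ [s]) (ev s) = (\<lambda>k. (-1) * wm ws (ev s) k)"
    using e calculation(2) wm_smult[of ws "-1" "ev s"] by simp
  ultimately show ?thesis by auto
qed

end

lemma ipair_add1: "ipair (y + z) x = ipair y x + ipair z x"
  by (simp add: ipair_def algebra_simps sum.distrib)
lemma ipair_add2: "ipair y (x + z) = ipair y x + ipair y z"
  by (simp add: ipair_def algebra_simps sum.distrib)
lemma ipair_diff1: "ipair (y - z) x = ipair y x - ipair z x"
  by (simp add: ipair_def algebra_simps sum_subtractf)
lemma ipair_diff2: "ipair y (x - z) = ipair y x - ipair y z"
  by (simp add: ipair_def algebra_simps sum_subtractf)
lemma ipair_neg1: "ipair (- y) x = - ipair y x"
  by (simp add: ipair_def sum_negf)
lemma ipair_neg2: "ipair y (- x) = - ipair y x"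
  by (simp add: ipair_def sum_negf)
lemma ipair_smult1: "ipair (k *s y) x = k * ipair y x"
  by (simp add: ipair_def sum_distrib_left algebra_simps)
lemma ipair_smult2: "ipair y (k *s x) = k * ipair y x"
  by (simp add: ipair_def sum_distrib_left algebra_simps)
lemma ipair_sum1: "ipair (\<Sum>i\<in>S. f i) x = (\<Sum>i\<in>S. ipair (f i) x)"
  by (simp add: ipair_def sum_distrib_right sum_component) (rule sum.swap)
lemma ipair_sum2: "ipair y (\<Sum>i\<in>S. f i) = (\<Sum>i\<in>S. ipair y (f i))"
  by (simp add: ipair_def sum_distrib_left sum_component) (rule sum.swap)

lemmas ipair_simps = ipair_add1 ipair_add2 ipair_diff1 ipair_diff2 ipair_neg1 ipair_neg2
  ipair_smult1 ipair_smult2 ipair_sum1 ipair_sum2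

lemma ipair_rv: "real_of_int (ipair y x) = rv y \<bullet> rv x"
  by (simp add: ipair_def rv_def inner_vec_def)

lemma rv_add: "rv (x + y) = rv x + rv y" by (simp add: rv_def vec_eq_iff)
lemma rv_diff: "rv (x - y) = rv x - rv y" by (simp add: rv_def vec_eq_iff)
lemma rv_neg: "rv (- x) = - rv x" by (simp add: rv_def vec_eq_iff)
lemma rv_smult: "rv (k *s x) = real_of_int k *\<^sub>R rv x" by (simp add: rv_def vec_eq_iff)
lemma rv_zero: "rv 0 = 0" by (simp add: rv_def vec_eq_iff)
lemma rv_sum: "rv (\<Sum>i\<in>S. f i) = (\<Sum>i\<in>S. rv (f i))"
  by (induction S rule: infinite_finite_induct) (auto simp: rv_add rv_zero)
lemma rv_inj: "rv x = rv y \<Longrightarrow> x = y" by (simp add: rv_def vec_eq_iff)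

lemmas rv_simps = rv_add rv_diff rv_neg rv_smult rv_sum rv_zero

lemma reflX_adj: "ipair (reflY cor rt i y) x = ipair y (reflX cor rt i x)"
  by (simp add: reflX_def reflY_def ipair_simps algebra_simps)

lemma reflX_invol: "ipair (cor i) (rt i) = 2 \<Longrightarrow> reflX cor rt i (reflX cor rt i a) = a"
  by (simp add: reflX_def ipair_simps algebra_simps vec_eq_iff)

lemma reflY_invol: "ipair (cor i) (rt i) = 2 \<Longrightarrow> reflY cor rt i (reflY cor rt i a) = a"
  by (simp add: reflY_def ipair_simps algebra_simps vec_eq_iff)

definition rX :: "int^'n \<Rightarrow> int^'n \<Rightarrow> int^'n \<Rightarrow> int^'n" where
  "rX a c x = x - ipair c x *s a"
definition rY :: "int^'n \<Rightarrow> int^'n \<Rightarrow> int^'n \<Rightarrow> int^'n" where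
  "rY a c y = y - ipair y a *s c"

lemma rX_simple: "rX (rt i) (cor i) = reflX cor rt i" by (simp add: fun_eq_iff rX_def reflX_def)
lemma rY_simple: "rY (rt i) (cor i) = reflY cor rt i" by (simp add: fun_eq_iff rY_def reflY_def)

lemma rX_adj: "ipair (rY a c y) x = ipair y (rX a c x)"
  by (simp add: rX_def rY_def ipair_simps algebra_simps)

lemma rX_invol: "ipair c a = 2 \<Longrightarrow> rX a c (rX a c x) = x"
  by (simp add: rX_def ipair_simps algebra_simps vec_eq_iff)
lemma rY_invol: "ipair c a = 2 \<Longrightarrow> rY a c (rY a c x) = x"
  by (simp add: rY_def ipair_simps algebra_simps vec_eq_iff)

lemma rX_conj:
  assumes "ipair (cor i) (rt i) = 2"
  shows "rX (reflX cor rt i a) (reflY cor rt i c) x = reflX cor rt i (rX a c (reflX cor rt i x))"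
  using assms by (simp add: rX_def reflX_def reflY_def ipair_simps algebra_simps vec_eq_iff)

lemma rY_conj:
  assumes "ipair (cor i) (rt i) = 2"
  shows "rY (reflX cor rt i a) (reflY cor rt i c) y = reflY cor rt i (rY a c (reflY cor rt i y))"
  using assms by (simp add: rY_def reflX_def reflY_def ipair_simps algebra_simps vec_eq_iff)


locale rd =
  fixes cor rt :: "'i::finite \<Rightarrow> int^'n" and Q :: "int^'n \<Rightarrow> int" and n :: nat
    and theta :: "int^'n" and d :: "'i \<Rightarrow> real"
  assumes dpos: "\<And>i. d i > 0"
    and dsym: "\<And>i j. d i * ipair (cor i) (rt j) = d j * ipair (cor j) (rt i)"
    and pdef: "\<And>x. x \<noteq> (\<lambda>_. 0) \<Longrightarrow> (\<Sum>i\<in>UNIV. \<Sum>j\<in>UNIV. x i * d i * of_int (ipair (cor i) (rt j)) * x j) > 0"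
    and diagA: "\<And>i. ipair (cor i) (rt i) = 2"
    and offdA: "\<And>i j. i \<noteq> j \<Longrightarrow> ipair (cor i) (rt j) \<le> 0"
    and zsymA: "\<And>i j. ipair (cor i) (rt j) = 0 \<longleftrightarrow> ipair (cor j) (rt i) = 0"
    and n_pos: "n \<ge> 1" and quad: "quadratic_form Q" and inv: "W_invariant cor rt Q"
    and highest: "tw_highest cor rt Q n theta"
begin

abbreviation Am :: "'i \<Rightarrow> 'i \<Rightarrow> int" where "Am i j \<equiv> ipair (cor i) (rt j)"

lemma sum_two:
  assumes "(i::'i) \<noteq> j"
  shows "(\<Sum>k\<in>UNIV. (if k = i then f k else if k = j then g k else 0)) = f i + (g j :: real)"
proof -
  have "(\<Sum>k\<in>UNIV. (if k = i then f k else if k = j then g k else 0)) =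
        (\<Sum>k\<in>UNIV. (if k = i then f k else 0) + (if k = j then g k else 0))"
    by (rule sum.cong) (use assms in auto)
  also have "\<dots> = f i + g j" by (simp add: sum.distrib)
  finally show ?thesis .
qed

lemma prod4: "i \<noteq> j \<Longrightarrow> Am i j * Am j i < 4"
proof -
  assume ij: "i \<noteq> j"
  define x :: "'i \<Rightarrow> real" where "x = (\<lambda>k. if k = i then - of_int (Am i j) else if k = j then 2 else 0)"
  have xnz: "x \<noteq> (\<lambda>_. 0)" using ij by (auto simp: x_def fun_eq_iff)
  have inner: "(\<Sum>l\<in>UNIV. x k * d k * of_int (Am k l) * x l) =
      (if k = i then x i * d i * of_int (Am i i) * x i + x i * d i * of_int (Am i j) * x j
       else if k = j then x j * d j * of_int (Am j i) * x i + x j * d j * of_int (Am j j) * x j else 0)" for k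
  proof -
    have "(\<Sum>l\<in>UNIV. x k * d k * of_int (Am k l) * x l) =
          (\<Sum>l\<in>UNIV. (if l = i then x k * d k * of_int (Am k i) * x i else if l = j then x k * d k * of_int (Am k j) * x j else 0))"
      by (rule sum.cong) (auto simp: x_def)
    also have "\<dots> = x k * d k * of_int (Am k i) * x i + x k * d k * of_int (Am k j) * x j"
      by (rule sum_two[OF ij])
    finally show ?thesis by (auto simp: x_def)
  qed
  have "(\<Sum>k\<in>UNIV. \<Sum>l\<in>UNIV. x k * d k * of_int (Am k l) * x l) =
        (x i * d i * of_int (Am i i) * x i + x i * d i * of_int (Am i j) * x j) +
        (x j * d j * of_int (Am j i) * x i + x j * d j * of_int (Am j j) * x j)"
    unfolding inner by (rule sum_two[OF ij])
  also have "\<dots> = 2 * d j * (4 - of_int (Am i j) * of_int (Am j i))"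
  proof -
    have e: "d i * of_int (Am i j) = d j * of_int (Am j i)" using dsym[of i j] by simp
    have "x i * d i * of_int (Am i i) * x i = 2 * of_int (Am i j) * (d i * of_int (Am i j))"
      using ij by (simp add: x_def diagA)
    moreover have "x i * d i * of_int (Am i j) * x j = -2 * of_int (Am i j) * (d i * of_int (Am i j))"
      using ij by (simp add: x_def)
    ultimately show ?thesis using ij e by (simp add: x_def diagA algebra_simps)
  qed
  finally have "2 * d j * (4 - of_int (Am i j) * of_int (Am j i)) > 0" using pdef[OF xnz] by simp
  then have "4 - of_int (Am i j) * of_int (Am j i) > (0::real)" using dpos[of j]
    by (simp add: zero_less_mult_iff)
  then show ?thesis by (simp flip: of_int_mult)
qed

sublocale cartanA Am
  by unfold_locales (auto simp: diagA offdA zsymA prod4)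

abbreviation RP where "RP \<equiv> rootpairs cor rt"

lemma RP_pair: "(a,c) \<in> RP \<Longrightarrow> ipair c a = 2"
proof (induction rule: rootpairs.induct)
  case (simple i) then show ?case by (simp add: diagA)
next
  case (refl a c i) then show ?case by (simp add: reflX_adj reflX_invol diagA)
qed

lemma RP_rrefl: "(a,c) \<in> RP \<Longrightarrow> (a',c') \<in> RP \<Longrightarrow> (rX a c a', rY a c c') \<in> RP"
proof (induction arbitrary: a' c' rule: rootpairs.induct)
  case (simple i) then show ?case by (simp add: rX_simple rY_simple rootpairs.refl)
next
  case (refl a c i)
  have "(reflX cor rt i a', reflY cor rt i c') \<in> RP" using refl.prems by (rule rootpairs.refl)
  then have "(rX a c (reflX cor rt i a'), rY a c (reflY cor rt i c')) \<in> RP" by (rule refl.IH)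
  then have "(reflX cor rt i (rX a c (reflX cor rt i a')), reflY cor rt i (rY a c (reflY cor rt i c'))) \<in> RP"
    by (rule rootpairs.refl)
  then show ?case by (simp add: rX_conj rY_conj diagA)
qed

lemma RP_neg: "(a,c) \<in> RP \<Longrightarrow> (-a,-c) \<in> RP"
proof -
  assume h: "(a,c) \<in> RP"
  have "(rX a c a, rY a c c) \<in> RP" using RP_rrefl[OF h h] .
  moreover have "rX a c a = -a" "rY a c c = -c" using RP_pair[OF h]
    by (auto simp: rX_def rY_def vec_eq_iff)
  ultimately show ?thesis by simp
qed

lemma RP_simple_refl: "(a,c) \<in> RP \<Longrightarrow> (reflX cor rt i a, reflY cor rt i c) \<in> RP"
  by (rule rootpairs.refl)

lemma Q_smult: "Q (k *s y) = k^2 * Q y" using quad by (simp add: quadratic_form_def)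
lemma Bf_add1: "Bf Q (y + y') z = Bf Q y z + Bf Q y' z" using quad by (simp add: quadratic_form_def)
lemma Bf_add2: "Bf Q y (z + z') = Bf Q y z + Bf Q y z'" using quad by (simp add: quadratic_form_def)
lemma Bf_sym: "Bf Q y z = Bf Q z y" by (simp add: Bf_def add.commute)
lemma Q_zero: "Q 0 = 0" using Q_smult[of 0 0] by simp
lemma Q_neg: "Q (- y) = Q y"
proof -
  have "- y = (-1) *s y" by (simp add: vec_eq_iff)
  then show ?thesis using Q_smult[of "-1" y] by simp
qed
lemma Bf_zero2: "Bf Q y 0 = 0" by (simp add: Bf_def Q_zero)
lemma Bf_neg2: "Bf Q y (- z) = - Bf Q y z"
  using Bf_add2[of y z "-z"] Bf_zero2[of y] by simp
lemma Bf_smult_nat: "Bf Q y (int k *s z) = int k * Bf Q y z"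
proof (induction k)
  case 0 then show ?case using Bf_zero2 by simp
next
  case (Suc k)
  have "int (Suc k) *s z = int k *s z + z" by (simp add: vec_eq_iff algebra_simps)
  then show ?case using Suc Bf_add2 by (simp add: algebra_simps)
qed
lemma Bf_smult2: "Bf Q y (k *s z) = k * Bf Q y z"
proof (cases "k \<ge> 0")
  case True then show ?thesis using Bf_smult_nat[of y "nat k" z] by simp
next
  case False
  have "k *s z = - (int (nat (-k)) *s z)" using False by (simp add: vec_eq_iff)
  then show ?thesis using Bf_smult_nat[of y "nat (-k)" z] Bf_neg2 False by simp
qed
lemma Bf_self: "Bf Q c c = 2 * Q c"
proof -
  have "c + c = 2 *s c" by (simp add: vec_eq_iff)
  then show ?thesis using Q_smult[of 2 c] by (simp add: Bf_def)
qed

lemma Q_rY: "(a,c) \<in> RP \<Longrightarrow> Q (rY a c y) = Q y"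
proof (induction arbitrary: y rule: rootpairs.induct)
  case (simple i) then show ?case using inv by (simp add: rY_simple W_invariant_def)
next
  case (refl a c i)
  have "Q (rY (reflX cor rt i a) (reflY cor rt i c) y) = Q (reflY cor rt i (rY a c (reflY cor rt i y)))"
    by (simp add: rY_conj diagA)
  also have "\<dots> = Q (rY a c (reflY cor rt i y))" using inv by (simp add: W_invariant_def)
  also have "\<dots> = Q (reflY cor rt i y)" by (rule refl.IH)
  also have "\<dots> = Q y" using inv by (simp add: W_invariant_def)
  finally show ?case .
qed

lemma Bf_root: assumes h: "(a,c) \<in> RP" shows "Bf Q y c = ipair y a * Q c"
proof -
  have gen: "Bf Q y c = ipair y a * Q c" if m0: "ipair y a \<noteq> 0" for y
  proof -
    define m where "m = ipair y a"
    have "Q (rY a c y) = Q y" using Q_rY[OF h] .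
    moreover have "rY a c y = y + (- m) *s c" by (simp add: rY_def m_def vec_eq_iff)
    moreover have "Q (y + (- m) *s c) = Bf Q y ((- m) *s c) + Q y + Q ((- m) *s c)" by (simp add: Bf_def)
    ultimately have "0 = (- m) * Bf Q y c + m^2 * Q c" using Bf_smult2 Q_smult by simp
    then have E0: "(- m) * Bf Q y c + m^2 * Q c = 0" by simp
    have "m * (m * Q c - Bf Q y c) = (- m) * Bf Q y c + m^2 * Q c" by (simp add: algebra_simps power2_eq_square)
    also have "\<dots> = 0" by (rule E0)
    finally have "m * (m * Q c - Bf Q y c) = 0" .
    then have "m * Q c - Bf Q y c = 0" using m0 m_def by (simp only: mult_eq_0_iff) simp
    then show ?thesis using m_def by simp
  qed
  show ?thesis
  proof (cases "ipair y a = 0")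
    case False then show ?thesis by (rule gen)
  next
    case True
    have p2: "ipair c a = 2" using RP_pair[OF h] .
    have "Bf Q (y + c) c = ipair (y + c) a * Q c" using True p2 by (intro gen) (simp add: ipair_add1)
    then have "Bf Q y c + Bf Q c c = 2 * Q c" using True p2 by (simp add: Bf_add1 ipair_add1)
    then show ?thesis using True Bf_self by simp
  qed
qed

lemma nQ_ex: "0 < n \<and> int n dvd int n * Q c" using n_pos by simp

lemma nQ_pos: "0 < nQ Q n c"
  unfolding nQ_def using LeastI_ex[of "\<lambda>m. 0 < m \<and> int n dvd int m * Q c"] nQ_ex by blast

lemma nQ_dvd: "int n dvd int (nQ Q n c) * Q c"
  unfolding nQ_def using LeastI_ex[of "\<lambda>m. 0 < m \<and> int n dvd int m * Q c"] nQ_ex by blast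

lemma nQ_min: assumes "int n dvd m * Q c" shows "int (nQ Q n c) dvd m"
proof -
  define N where "N = int (nQ Q n c)"
  have Np: "N > 0" using nQ_pos N_def by simp
  define r where "r = m mod N"
  have r: "0 \<le> r" "r < N" using Np by (auto simp: r_def)
  have e: "m = (m div N) * N + r" by (simp add: r_def)
  have "m * Q c = ((m div N) * N + r) * Q c" using e by (rule arg_cong[where f="\<lambda>t. t * Q c"])
  then have "r * Q c = m * Q c - (m div N) * (N * Q c)" by (simp add: algebra_simps)
  moreover have "int n dvd N * Q c" using nQ_dvd N_def by simp
  ultimately have dv: "int n dvd int (nat r) * Q c" using assms r by simp
  have "r = 0"
  proof (rule ccontr)
    assume "r \<noteq> 0"
    then have "0 < nat r" using r by simp
    then have "nQ Q n c \<le> nat r" unfolding nQ_def using dv by (intro Least_le) simp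
    then show False using r N_def by simp
  qed
  then show ?thesis by (simp add: r_def N_def dvd_eq_mod_eq_0)
qed

lemma nQ_cong: "Q c = Q c' \<Longrightarrow> nQ Q n c = nQ Q n c'" by (simp add: nQ_def)

lemma nQ_neg: "nQ Q n (- c) = nQ Q n c" by (rule nQ_cong) (simp add: Q_neg)

lemma nQ_rY: "(a,c) \<in> RP \<Longrightarrow> nQ Q n (rY a c y) = nQ Q n y" by (rule nQ_cong) (rule Q_rY)

lemma nQ_int_dvd:
  assumes h: "(a,c) \<in> RP" and h': "(a',c') \<in> RP"
  shows "int (nQ Q n c') dvd ipair c a' * int (nQ Q n c)"
proof (rule nQ_min)
  have "ipair c a' * int (nQ Q n c) * Q c' = int (nQ Q n c) * Bf Q c c'"
    using Bf_root[OF h', of c] by simp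
  also have "\<dots> = int (nQ Q n c) * (ipair c' a * Q c)" using Bf_root[OF h, of c'] Bf_sym by simp
  also have "\<dots> = ipair c' a * (int (nQ Q n c) * Q c)" by simp
  finally have E: "ipair c a' * int (nQ Q n c) * Q c' = ipair c' a * (int (nQ Q n c) * Q c)" .
  have "int n dvd ipair c' a * (int (nQ Q n c) * Q c)" using nQ_dvd[of c] by (rule dvd_mult)
  then show "int n dvd ipair c a' * int (nQ Q n c) * Q c'" by (subst E)
qed

end


context rd
begin

definition cX :: "('i \<Rightarrow> int) \<Rightarrow> int^'n" where "cX l = (\<Sum>k\<in>UNIV. l k *s rt k)"
definition cY :: "('i \<Rightarrow> int) \<Rightarrow> int^'n" where "cY m = (\<Sum>k\<in>UNIV. m k *s cor k)"
definition srT :: "'i \<Rightarrow> ('i \<Rightarrow> int) \<Rightarrow> ('i \<Rightarrow> int)" where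
  "srT i m = m(i := m i - (\<Sum>k\<in>UNIV. m k * Am k i))"
definition rl :: "('i \<Rightarrow> int) \<Rightarrow> ('i \<Rightarrow> real)" where "rl l = (\<lambda>k. real_of_int (l k))"
definition bl :: "('i \<Rightarrow> real) \<Rightarrow> ('i \<Rightarrow> real) \<Rightarrow> real" where
  "bl x y = (\<Sum>j\<in>UNIV. \<Sum>k\<in>UNIV. x j * d j * of_int (Am j k) * y k)"
definition qf :: "('i \<Rightarrow> int) \<Rightarrow> real" where "qf l = bl (rl l) (rl l)"
definition evr :: "'i \<Rightarrow> 'i \<Rightarrow> real" where "evr i = (\<lambda>k. if k = i then 1 else 0)"

lemma sum_evr: "(\<Sum>k\<in>UNIV. f k * evr i k) = f i"
proof -
  have "(\<Sum>k\<in>UNIV. f k * evr i k) = (\<Sum>k\<in>UNIV. if k = i then f k else 0)"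
    by (rule sum.cong) (auto simp: evr_def)
  then show ?thesis by simp
qed

lemma sum_evr': "(\<Sum>k\<in>UNIV. evr i k * f k) = f i"
  using sum_evr[of f i] by (simp add: mult.commute)

lemma bl_lin1: "bl (\<lambda>k. x k + c * y k) z = bl x z + c * bl y z"
  by (simp add: bl_def algebra_simps sum.distrib sum_distrib_left)
lemma bl_lin2: "bl z (\<lambda>k. x k + c * y k) = bl z x + c * bl z y"
  by (simp add: bl_def algebra_simps sum.distrib sum_distrib_left)
lemma bl_sym: "bl x y = bl y x"
proof -
  have "bl x y = (\<Sum>j\<in>UNIV. \<Sum>k\<in>UNIV. y k * d k * of_int (Am k j) * x j)"
    unfolding bl_def
  proof (rule sum.cong[OF HOL.refl], rule sum.cong[OF HOL.refl])
    fix j k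
    have "d j * of_int (Am j k) = d k * of_int (Am k j)" using dsym[of j k] by (simp flip: of_int_mult)
    then show "x j * d j * of_int (Am j k) * y k = y k * d k * of_int (Am k j) * x j"
      by (simp add: algebra_simps)
  qed
  also have "\<dots> = bl y x" unfolding bl_def by (rule sum.swap)
  finally show ?thesis .
qed
lemma bl_evr1: "bl (evr i) y = d i * (\<Sum>k\<in>UNIV. of_int (Am i k) * y k)"
proof -
  have "bl (evr i) y = (\<Sum>j\<in>UNIV. evr i j * (\<Sum>k\<in>UNIV. d j * of_int (Am j k) * y k))"
    unfolding bl_def by (rule sum.cong) (auto simp: sum_distrib_left algebra_simps)
  also have "\<dots> = (\<Sum>k\<in>UNIV. d i * of_int (Am i k) * y k)" by (rule sum_evr')
  finally show ?thesis by (simp add: sum_distrib_left algebra_simps)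
qed

lemma rl_sr: "rl (sr i l) = (\<lambda>k. rl l k + (- of_int (\<Sum>k\<in>UNIV. Am i k * l k)) * evr i k)"
  by (auto simp: rl_def sr_def evr_def fun_eq_iff)

lemma qf_sr: "qf (sr i l) = qf l"
proof -
  define x where "x = rl l"
  define p where "p = (\<Sum>k\<in>UNIV. of_int (Am i k) * x k)"
  have pp: "of_int (\<Sum>k\<in>UNIV. Am i k * l k) = p" by (simp add: p_def x_def rl_def)
  have "qf (sr i l) = bl (\<lambda>k. x k + (-p) * evr i k) (\<lambda>k. x k + (-p) * evr i k)"
    unfolding qf_def rl_sr pp x_def ..
  also have "\<dots> = bl x x - p * bl (evr i) x - p * bl x (evr i) + p * p * bl (evr i) (evr i)"
    by (simp only: bl_lin1 bl_lin2) (simp add: algebra_simps)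
  also have "bl (evr i) (evr i) = 2 * d i" by (simp add: bl_evr1 sum_evr diagA)
  also have "bl x (evr i) = bl (evr i) x" by (rule bl_sym)
  also have "bl (evr i) x = d i * p" by (simp add: bl_evr1 p_def)
  finally show ?thesis by (simp add: qf_def x_def algebra_simps)
qed

lemma bl_pdef: "bl x x = 0 \<Longrightarrow> x = (\<lambda>_. 0)"
  using pdef[of x] unfolding bl_def by force

lemma ipair_cor_cX: "ipair (cor i) (cX l) = (\<Sum>k\<in>UNIV. Am i k * l k)"
  by (simp add: cX_def ipair_sum2 ipair_smult2 mult.commute)
lemma ipair_cY_rt: "ipair (cY m) (rt i) = (\<Sum>k\<in>UNIV. m k * Am k i)"
  by (simp add: cY_def ipair_sum1 ipair_smult1)

lemma cX_upd: "cX (l(i := v)) = cX l + (v - l i) *s rt i"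
proof -
  have "cX (l(i := v)) = (\<Sum>k\<in>UNIV. l k *s rt k + (if k = i then (v - l i) *s rt i else 0))"
    unfolding cX_def by (rule sum.cong) (auto simp: vec_eq_iff algebra_simps)
  also have "\<dots> = cX l + (v - l i) *s rt i" by (simp add: sum.distrib cX_def)
  finally show ?thesis .
qed
lemma cY_upd: "cY (m(i := v)) = cY m + (v - m i) *s cor i"
proof -
  have "cY (m(i := v)) = (\<Sum>k\<in>UNIV. m k *s cor k + (if k = i then (v - m i) *s cor i else 0))"
    unfolding cY_def by (rule sum.cong) (auto simp: vec_eq_iff algebra_simps)
  also have "\<dots> = cY m + (v - m i) *s cor i" by (simp add: sum.distrib cY_def)
  finally show ?thesis .
qed

lemma reflX_cX: "reflX cor rt i (cX l) = cX (sr i l)"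
  by (simp add: sr_def cX_upd reflX_def ipair_cor_cX vec_eq_iff algebra_simps)
lemma reflY_cY: "reflY cor rt i (cY m) = cY (srT i m)"
  by (simp add: srT_def cY_upd reflY_def ipair_cY_rt vec_eq_iff algebra_simps)

lemma cX_ev: "cX (ev j) = rt j"
proof -
  have "cX (ev j) = (\<Sum>k\<in>UNIV. if k = j then rt k else 0)"
    unfolding cX_def by (rule sum.cong) (auto simp: ev_def)
  then show ?thesis by simp
qed
lemma cY_ev: "cY (ev j) = cor j"
proof -
  have "cY (ev j) = (\<Sum>k\<in>UNIV. if k = j then cor k else 0)"
    unfolding cY_def by (rule sum.cong) (auto simp: ev_def)
  then show ?thesis by simp
qed

definition good :: "int^'n \<Rightarrow> int^'n \<Rightarrow> ('i \<Rightarrow> int) \<Rightarrow> ('i \<Rightarrow> int) \<Rightarrow> bool" where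
  "good a c l m \<longleftrightarrow> a = cX l \<and> c = cY m \<and> (\<exists>ws j. l = wm ws (ev j)) \<and> qf l > 0 \<and>
      (\<forall>k. qf l * of_int (m k) = 2 * d k * of_int (l k))"

lemma RP_coords: "(a,c) \<in> RP \<Longrightarrow> \<exists>l m. good a c l m"
proof (induction rule: rootpairs.induct)
  case (simple j)
  have q: "qf (ev j) = 2 * d j"
  proof -
    have "rl (ev j) = evr j" by (auto simp: rl_def ev_def evr_def fun_eq_iff)
    then show ?thesis by (simp add: qf_def bl_evr1 sum_evr sum_evr' diagA)
  qed
  have w: "\<exists>ws j'. ev j = wm ws (ev j')" by (rule exI[of _ "[]"], rule exI[of _ j]) simp
  have f: "\<forall>k. qf (ev j) * of_int (ev j k) = 2 * d k * of_int (ev j k)" using q by (auto simp: ev_def)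
  have "good (rt j) (cor j) (ev j) (ev j)"
    unfolding good_def using dpos[of j] w f by (simp add: cX_ev cY_ev q)
  then show ?case by blast
next
  case (refl a c i)
  then obtain l m where g: "good a c l m" by blast
  then obtain ws j where lw: "l = wm ws (ev j)" unfolding good_def by blast
  have "good (reflX cor rt i a) (reflY cor rt i c) (sr i l) (srT i m)"
    unfolding good_def
  proof (intro conjI allI)
    show "reflX cor rt i a = cX (sr i l)" using g by (simp add: good_def reflX_cX)
    show "reflY cor rt i c = cY (srT i m)" using g by (simp add: good_def reflY_cY)
    show "\<exists>ws j. sr i l = wm ws (ev j)" using lw by (intro exI[of _ "i # ws"] exI[of _ j]) simp
    show "qf (sr i l) > 0" using g by (simp add: good_def qf_sr)
    fix k
    have F: "\<And>k. qf l * of_int (m k) = 2 * d k * of_int (l k)" using g by (simp add: good_def)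
    show "qf (sr i l) * of_int (srT i m k) = 2 * d k * of_int (sr i l k)"
    proof (cases "k = i")
      case False then show ?thesis using F by (simp only: qf_sr) (simp add: srT_def sr_def)
    next
      case True
      have "qf l * of_int (\<Sum>t\<in>UNIV. m t * Am t i) = (\<Sum>t\<in>UNIV. (qf l * of_int (m t)) * of_int (Am t i))"
        by (simp add: sum_distrib_left algebra_simps)
      also have "\<dots> = (\<Sum>t\<in>UNIV. 2 * (d t * of_int (Am t i)) * of_int (l t))"
        using F by (simp add: algebra_simps)
      also have "\<dots> = (\<Sum>t\<in>UNIV. 2 * (d i * of_int (Am i t)) * of_int (l t))"
        using dsym by (simp flip: of_int_mult)
      also have "\<dots> = 2 * d i * of_int (\<Sum>t\<in>UNIV. Am i t * l t)"
        by (simp add: sum_distrib_left algebra_simps)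
      finally have S: "qf l * of_int (\<Sum>t\<in>UNIV. m t * Am t i) = 2 * d i * of_int (\<Sum>t\<in>UNIV. Am i t * l t)" .
      show ?thesis using True F[of i] S by (simp only: qf_sr) (simp add: srT_def sr_def algebra_simps)
    qed
  qed
  then show ?case by blast
qed

lemma indep_real:
  assumes "(\<Sum>k\<in>UNIV. x k *\<^sub>R rv (rt k)) = 0"
  shows "x = (\<lambda>_. 0)"
proof -
  have row: "(\<Sum>k\<in>UNIV. of_int (Am j k) * x k) = 0" for j
  proof -
    have "rv (cor j) \<bullet> (\<Sum>k\<in>UNIV. x k *\<^sub>R rv (rt k)) = 0" using assms by simp
    then show ?thesis by (simp add: inner_sum_right ipair_rv[symmetric] algebra_simps)
  qed
  have "bl x x = 0"
  proof -
    have "bl x x = (\<Sum>j\<in>UNIV. x j * d j * (\<Sum>k\<in>UNIV. of_int (Am j k) * x k))"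
      unfolding bl_def by (rule sum.cong) (auto simp: sum_distrib_left algebra_simps)
    then show ?thesis using row by simp
  qed
  then show ?thesis by (rule bl_pdef)
qed

lemma rv_cX: "rv (cX l) = (\<Sum>k\<in>UNIV. rl l k *\<^sub>R rv (rt k))"
  by (simp add: cX_def rv_sum rv_smult rl_def)

lemma cX_inj: "cX l = cX l' \<Longrightarrow> l = l'"
proof -
  assume "cX l = cX l'"
  then have "rv (cX l) - rv (cX l') = 0" by simp
  then have "(\<Sum>k\<in>UNIV. (rl l k - rl l' k) *\<^sub>R rv (rt k)) = 0"
    by (simp add: rv_cX sum_subtractf scaleR_diff_left)
  then have "(\<lambda>k. rl l k - rl l' k) = (\<lambda>_. 0)" by (rule indep_real)
  then show "l = l'" by (auto simp: rl_def fun_eq_iff)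
qed

lemma good_unique:
  assumes "good a c l m" "good a c' l' m'"
  shows "c = c'"
proof -
  have "l = l'" using assms cX_inj unfolding good_def by metis
  have "m = m'"
  proof
    fix k
    have F1: "qf l * of_int (m k) = 2 * d k * of_int (l k)" using assms(1) unfolding good_def by blast
    have F2: "qf l' * of_int (m' k) = 2 * d k * of_int (l' k)" using assms(2) unfolding good_def by blast
    have P: "qf l > 0" using assms(1) unfolding good_def by blast
    have "qf l * of_int (m k) = qf l * of_int (m' k)" using F1 F2 \<open>l = l'\<close> by simp
    then have "real_of_int (m k) = of_int (m' k)" using P by simp
    then show "m k = m' k" by simp
  qed
  then show ?thesis using assms unfolding good_def by simp
qed

lemma coroot_unique: "(a,c) \<in> RP \<Longrightarrow> (a,c') \<in> RP \<Longrightarrow> c = c'"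
  using RP_coords good_unique by metis

lemma coroot_eq: "(a,c) \<in> RP \<Longrightarrow> coroot cor rt a = c"
  unfolding coroot_def using coroot_unique by blast

lemma roots_RP: "a \<in> roots cor rt \<Longrightarrow> (a, coroot cor rt a) \<in> RP"
  unfolding roots_def using coroot_eq by force

lemma RP_coherent: "(a,c) \<in> RP \<Longrightarrow> \<exists>l. a = cX l \<and> ((\<forall>k. l k \<ge> 0) \<or> (\<forall>k. l k \<le> 0))"
  using RP_coords coherent unfolding good_def by metis

end


context rd
begin

section \<open>Reducedness\<close>

definition srR :: "'i \<Rightarrow> ('i \<Rightarrow> real) \<Rightarrow> ('i \<Rightarrow> real)" where
  "srR i x = x(i := x i - (\<Sum>k\<in>UNIV. of_int (Am i k) * x k))"

fun wmR :: "'i list \<Rightarrow> ('i \<Rightarrow> real) \<Rightarrow> ('i \<Rightarrow> real)" where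
  "wmR [] = id" | "wmR (i#ws) = srR i \<circ> wmR ws"

lemma rl_wm: "rl (wm ws l) = wmR ws (rl l)"
  by (induction ws) (auto simp: rl_def srR_def sr_def fun_eq_iff)

lemma srR_smult: "srR i (\<lambda>k. C * x k) = (\<lambda>k. C * srR i x k)"
  by (auto simp: srR_def fun_eq_iff sum_distrib_left algebra_simps)

lemma wmR_smult: "wmR ws (\<lambda>k. C * x k) = (\<lambda>k. C * wmR ws x k)"
  by (induction ws) (auto simp: srR_smult)

lemma wm_rev_wm: "wm (rev ws) (wm ws x) = x"
  using wm_rev_inv[of ws] by (simp add: fun_eq_iff)

lemma RP_wm: "(cX l, c) \<in> RP \<Longrightarrow> \<exists>c'. (cX (wm vs l), c') \<in> RP"
proof (induction vs)
  case Nil then show ?case by auto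
next
  case (Cons i vs)
  then obtain c' where "(cX (wm vs l), c') \<in> RP" by blast
  then have "(reflX cor rt i (cX (wm vs l)), reflY cor rt i c') \<in> RP" by (rule rootpairs.refl)
  then show ?case by (auto simp: reflX_cX)
qed

lemma bl_scale: "bl (\<lambda>k. C * x k) (\<lambda>k. C * y k) = C * C * bl x y"
  by (simp add: bl_def sum_distrib_left algebra_simps)

lemma reduced:
  assumes h: "(a,c) \<in> RP" and h': "(a',c') \<in> RP" and eq: "rv a = C *\<^sub>R rv a'" and C: "C > 0"
  shows "a = a' \<and> C = 1"
proof -
  obtain l m where g: "good a c l m" using RP_coords[OF h] by blast
  obtain l' m' where g': "good a' c' l' m'" using RP_coords[OF h'] by blast
  obtain ws j where lw: "l' = wm ws (ev j)" using g' unfolding good_def by blast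
  have a: "a = cX l" "a' = cX l'" using g g' unfolding good_def by auto
  have "(\<Sum>k\<in>UNIV. (rl l k - C * rl l' k) *\<^sub>R rv (rt k)) = rv a - C *\<^sub>R rv a'"
    by (simp add: a rv_cX scaleR_diff_left sum_subtractf scaleR_sum_right)
  also have "\<dots> = 0" using eq by simp
  finally have "(\<lambda>k. rl l k - C * rl l' k) = (\<lambda>_. 0)" by (rule indep_real)
  then have lC: "rl l = (\<lambda>k. C * rl l' k)" by (auto simp: fun_eq_iff)
  define nu where "nu = wm (rev ws) l"
  have "rl nu = wmR (rev ws) (rl l)" by (simp add: nu_def rl_wm)
  also have "\<dots> = (\<lambda>k. C * wmR (rev ws) (rl l') k)" by (simp add: lC wmR_smult)
  also have "wmR (rev ws) (rl l') = rl (ev j)" by (simp add: lw rl_wm[symmetric] wm_rev_wm)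
  finally have nu: "rl nu = (\<lambda>k. C * rl (ev j) k)" .
  obtain c'' where "(cX nu, c'') \<in> RP" using RP_wm[of l c "rev ws"] h a nu_def by auto
  then obtain l'' m'' where g'': "good (cX nu) c'' l'' m''" using RP_coords by blast
  then have "l'' = nu" using cX_inj unfolding good_def by metis
  then have F: "qf nu * of_int (m'' j) = 2 * d j * of_int (nu j)" using g'' unfolding good_def by blast
  have nuj: "of_int (nu j) = C" using nu by (auto simp: fun_eq_iff rl_def ev_def dest: spec[of _ j])
  have "rl (ev j) = evr j" by (auto simp: rl_def ev_def evr_def fun_eq_iff)
  then have "qf nu = C * C * bl (evr j) (evr j)" by (simp add: qf_def nu bl_scale)
  also have "bl (evr j) (evr j) = 2 * d j" by (simp add: bl_evr1 sum_evr diagA)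
  finally have "C * C * (2 * d j) * of_int (m'' j) = 2 * d j * C" using F nuj by simp
  then have "C * of_int (m'' j) = 1" using C dpos[of j] by (simp add: algebra_simps)
  then have "of_int (nu j * m'' j) = (1::real)" using nuj by simp
  then have "nu j * m'' j = 1" by linarith
  moreover have "nu j > 0" using nuj C by simp
  ultimately have "nu j = 1" using pos_zmult_eq_1_iff by blast
  then have C1: "C = 1" using nuj by simp
  then have "rv a = rv a'" using eq by simp
  then show ?thesis using rv_inj C1 by blast
qed

abbreviation ctheta where "ctheta \<equiv> coroot cor rt theta"

lemma theta_root: "theta \<in> roots cor rt" using highest by (simp add: tw_highest_def)

lemma theta_RP: "(theta, ctheta) \<in> RP" using roots_RP[OF theta_root] .

definition tl :: "'i \<Rightarrow> int" where "tl = (SOME l. theta = cX l)"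

lemma theta_cX: "theta = cX tl"
proof -
  obtain l m where "good theta ctheta l m" using RP_coords[OF theta_RP] by blast
  then have "\<exists>l. theta = cX l" unfolding good_def by blast
  then show ?thesis unfolding tl_def by (rule someI_ex)
qed

lemma HR:
  assumes h: "(a,c) \<in> RP" and al: "a = cX l"
  shows "rl l i / real (nQ Q n c) \<le> rl tl i / real (nQ Q n ctheta)"
proof -
  have "a \<in> roots cor rt" using h by (force simp: roots_def)
  then obtain m :: "'i \<Rightarrow> nat" where m: "tw_root cor rt Q n theta - tw_root cor rt Q n a =
      (\<Sum>i\<in>UNIV. real (m i) *\<^sub>R tw_sroot cor rt Q n i)"
    using highest by (auto simp: tw_highest_def)
  define Nt where "Nt = real (nQ Q n ctheta)"
  define Nc where "Nc = real (nQ Q n c)"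
  define Ni where "Ni = (\<lambda>i. real (nQ Q n (cor i)))"
  have ca: "coroot cor rt a = c" using coroot_eq[OF h] .
  have rth: "rv theta = (\<Sum>k\<in>UNIV. rl tl k *\<^sub>R rv (rt k))" by (subst theta_cX) (rule rv_cX)
  have ra: "rv a = (\<Sum>k\<in>UNIV. rl l k *\<^sub>R rv (rt k))" by (subst al) (rule rv_cX)
  have t1: "tw_root cor rt Q n theta = (\<Sum>k\<in>UNIV. (rl tl k / Nt) *\<^sub>R rv (rt k))"
    unfolding tw_root_def Nt_def rth
    by (simp add: scaleR_sum_right divide_inverse mult.commute)
  have t2: "tw_root cor rt Q n a = (\<Sum>k\<in>UNIV. (rl l k / Nc) *\<^sub>R rv (rt k))"
    unfolding tw_root_def Nc_def ca ra
    by (simp add: scaleR_sum_right divide_inverse mult.commute)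
  have t3: "(\<Sum>i\<in>UNIV. real (m i) *\<^sub>R tw_sroot cor rt Q n i) = (\<Sum>k\<in>UNIV. (real (m k) / Ni k) *\<^sub>R rv (rt k))"
    unfolding tw_sroot_def Ni_def by (simp add: divide_inverse mult.commute)
  have "(\<Sum>k\<in>UNIV. (rl tl k / Nt - rl l k / Nc - real (m k) / Ni k) *\<^sub>R rv (rt k)) =
        tw_root cor rt Q n theta - tw_root cor rt Q n a - (\<Sum>i\<in>UNIV. real (m i) *\<^sub>R tw_sroot cor rt Q n i)"
    unfolding t1 t2 t3 by (simp add: scaleR_diff_left sum_subtractf)
  also have "\<dots> = 0" using m by simp
  finally have "(\<lambda>k. rl tl k / Nt - rl l k / Nc - real (m k) / Ni k) = (\<lambda>_. 0)" by (rule indep_real)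
  then have "rl tl i / Nt - rl l i / Nc = real (m i) / Ni i" by (auto simp: fun_eq_iff dest: spec[of _ i])
  moreover have "real (m i) / Ni i \<ge> 0" by (simp add: Ni_def)
  ultimately show ?thesis using Nt_def Nc_def by simp
qed

lemma tl_pos: "tl i > 0"
proof -
  have "rl (ev i) i / real (nQ Q n (cor i)) \<le> rl tl i / real (nQ Q n ctheta)"
    by (rule HR[OF rootpairs.simple cX_ev[symmetric]])
  moreover have "rl (ev i) i = 1" by (simp add: rl_def ev_def)
  moreover have "0 < 1 / real (nQ Q n (cor i))" using nQ_pos[of "cor i"] by simp
  ultimately have "0 < rl tl i / real (nQ Q n ctheta)" by (metis order_less_le_trans)
  then show ?thesis using nQ_pos[of ctheta] by (simp add: rl_def zero_less_divide_iff)
qed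

end


type_synonym 'n afr = "(int^'n) \<times> (int^'n) \<times> int"

context rd
begin

section \<open>Affine roots\<close>

abbreviation rho where "rho \<equiv> rhoc cor rt"
definition NN :: "int^'n \<Rightarrow> real" where "NN c = real (nQ Q n c)"

definition phi :: "'n afr \<Rightarrow> real^'n \<Rightarrow> real" where
  "phi p x = (case p of (a,c,k) \<Rightarrow> (x + rho) \<bullet> rv a - of_int k * NN c)"
definition Rf :: "'n afr \<Rightarrow> real^'n \<Rightarrow> real^'n" where
  "Rf p x = (case p of (a,c,k) \<Rightarrow> x - phi p x *\<^sub>R rv c)"
definition AR :: "'n afr set" where
  "AR = {(a,c,k). (a,c) \<in> RP}"
definition act :: "'n afr \<Rightarrow> 'n afr \<Rightarrow> 'n afr" where
  "act p p' = (case p of (a,c,k) \<Rightarrow> case p' of (a',c',k') \<Rightarrow>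
     (rX a c a', rY a c c', k' - (k * ipair c a' * int (nQ Q n c)) div int (nQ Q n c')))"

lemma phi_simp: "phi (a,c,k) x = (x + rho) \<bullet> rv a - of_int k * NN c" by (simp add: phi_def)
lemma Rf_simp: "Rf (a,c,k) x = x - phi (a,c,k) x *\<^sub>R rv c" by (simp add: Rf_def)
lemma AR_iff[simp]: "(a,c,k) \<in> AR \<longleftrightarrow> (a,c) \<in> RP" by (simp add: AR_def)
lemma act_simp: "act (a,c,k) (a',c',k') =
     (rX a c a', rY a c c', k' - (k * ipair c a' * int (nQ Q n c)) div int (nQ Q n c'))"
  by (simp add: act_def)

lemma NN_pos: "NN c > 0" using nQ_pos by (simp add: NN_def)

lemma phi_shift: "phi (a,c,k) (x - s *\<^sub>R v) = phi (a,c,k) x - s * (v \<bullet> rv a)"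
  by (simp add: phi_simp inner_diff_left algebra_simps)

lemma RP_pair_real: "(a,c) \<in> RP \<Longrightarrow> rv c \<bullet> rv a = 2"
  using RP_pair ipair_rv by (metis of_int_numeral)

lemma phi_Rf: "(a,c) \<in> RP \<Longrightarrow> phi (a,c,k) (Rf (a,c,k) x) = - phi (a,c,k) x"
  unfolding Rf_simp by (subst phi_shift) (simp add: RP_pair_real)

lemma Rf_invol: "(a,c) \<in> RP \<Longrightarrow> Rf (a,c,k) (Rf (a,c,k) x) = x"
proof -
  assume h: "(a,c) \<in> RP"
  have "Rf (a,c,k) (Rf (a,c,k) x) = Rf (a,c,k) x - phi (a,c,k) (Rf (a,c,k) x) *\<^sub>R rv c"
    by (rule Rf_simp)
  also have "\<dots> = x" unfolding phi_Rf[OF h] by (simp add: Rf_simp)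
  finally show ?thesis .
qed

lemma act_AR: "p \<in> AR \<Longrightarrow> p' \<in> AR \<Longrightarrow> act p p' \<in> AR"
  by (cases p; cases p') (auto simp: act_simp RP_rrefl)

lemma rv_rX: "rv (rX a c a') = rv a' - of_int (ipair c a') *\<^sub>R rv a"
  by (simp add: rX_def rv_diff rv_smult)
lemma rv_rY: "rv (rY a c c') = rv c' - of_int (ipair c' a) *\<^sub>R rv c"
  by (simp add: rY_def rv_diff rv_smult)

lemma phi_act:
  assumes h: "(a,c) \<in> RP" and h': "(a',c') \<in> RP"
  shows "phi (act (a,c,k) (a',c',k')) x = phi (a',c',k') (Rf (a,c,k) x)"
proof -
  define D where "D = k * ipair c a' * int (nQ Q n c)"
  have dv: "int (nQ Q n c') dvd D" unfolding D_def using nQ_int_dvd[OF h h']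
    by (metis dvd_mult mult.assoc)
  have DD: "(D div int (nQ Q n c')) * int (nQ Q n c') = D" using dv by simp
  have N': "NN (rY a c c') = NN c'" by (simp add: NN_def nQ_rY[OF h])
  have "of_int (k' - D div int (nQ Q n c')) * NN c' = of_int k' * NN c' - of_int D"
  proof -
    have "of_int (D div int (nQ Q n c')) * NN c' = real_of_int ((D div int (nQ Q n c')) * int (nQ Q n c'))"
      by (simp add: NN_def)
    also have "\<dots> = of_int D" using DD by simp
    finally show ?thesis by (simp add: algebra_simps)
  qed
  then have "phi (act (a,c,k) (a',c',k')) x = (x + rho) \<bullet> rv (rX a c a') - (of_int k' * NN c' - of_int D)"
    by (simp add: act_simp N' D_def phi_simp)
  also have "\<dots> = phi (a',c',k') (Rf (a,c,k) x)"
    by (simp add: phi_simp Rf_simp rv_rX inner_diff_left inner_diff_right D_def NN_def ipair_rv algebra_simps)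
  finally show ?thesis .
qed

lemma Rf_act:
  assumes h: "(a,c) \<in> RP" and h': "(a',c') \<in> RP"
  shows "Rf (act (a,c,k) (a',c',k')) = Rf (a,c,k) \<circ> Rf (a',c',k') \<circ> Rf (a,c,k)"
proof
  fix x
  define w where "w = Rf (a,c,k) x"
  define s where "s = phi (a',c',k') w"
  have "(Rf (a,c,k) \<circ> Rf (a',c',k') \<circ> Rf (a,c,k)) x = Rf (a,c,k) (w - s *\<^sub>R rv c')"
    by (simp add: w_def s_def Rf_simp)
  also have "\<dots> = (w - s *\<^sub>R rv c') - (phi (a,c,k) w - s * (rv c' \<bullet> rv a)) *\<^sub>R rv c"
    by (simp add: Rf_simp phi_shift)
  also have "\<dots> = Rf (a,c,k) w - s *\<^sub>R (rv c' - (rv c' \<bullet> rv a) *\<^sub>R rv c)"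
    by (simp add: Rf_simp algebra_simps)
  also have "Rf (a,c,k) w = x" using Rf_invol[OF h] w_def by simp
  finally have R: "(Rf (a,c,k) \<circ> Rf (a',c',k') \<circ> Rf (a,c,k)) x = x - s *\<^sub>R (rv c' - (rv c' \<bullet> rv a) *\<^sub>R rv c)" .
  have "Rf (act (a,c,k) (a',c',k')) x = x - phi (act (a,c,k) (a',c',k')) x *\<^sub>R rv (rY a c c')"
    by (simp add: act_simp Rf_simp)
  also have "\<dots> = x - s *\<^sub>R (rv c' - (rv c' \<bullet> rv a) *\<^sub>R rv c)"
    using phi_act[OF h h'] by (simp add: s_def w_def rv_rY ipair_rv)
  finally show "Rf (act (a,c,k) (a',c',k')) x = (Rf (a,c,k) \<circ> Rf (a',c',k') \<circ> Rf (a,c,k)) x"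
    using R by simp
qed

definition sj :: "'i option \<Rightarrow> 'n afr" where
  "sj j = (case j of Some i \<Rightarrow> (rt i, cor i, 0) | None \<Rightarrow> (- theta, - ctheta, -1))"

lemma sj_AR: "sj j \<in> AR"
  by (cases j) (auto simp: sj_def rootpairs.simple RP_neg theta_RP)

abbreviation G where "G \<equiv> gen cor rt Q n theta"

lemma gen_eq: "G j = Rf (sj j)"
proof (rule ext)
  fix x
  show "G j x = Rf (sj j) x"
  proof (cases j)
    case (Some i)
    define N where "N = real (nQ Q n (cor i))"
    have N: "N \<noteq> 0" using nQ_pos[of "cor i"] by (simp add: N_def)
    have "G j x = x - ((x + rho) \<bullet> ((1 / N) *\<^sub>R rv (rt i))) *\<^sub>R rv (int (nQ Q n (cor i)) *s cor i)"
      by (simp add: Some gen_def aff_refl_def tw_sroot_def tw_scoroot_def tw_scor_def N_def)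
    also have "\<dots> = x - (((x + rho) \<bullet> rv (rt i)) / N) *\<^sub>R (N *\<^sub>R rv (cor i))"
      by (simp only: rv_smult inner_scaleR_right N_def of_int_of_nat_eq) (simp add: divide_inverse mult.commute)
    also have "\<dots> = x - ((x + rho) \<bullet> rv (rt i)) *\<^sub>R rv (cor i)" using N by simp
    also have "\<dots> = Rf (sj j) x" by (simp add: Some sj_def Rf_simp phi_simp)
    finally show ?thesis .
  next
  assume j: "j = None"
  define N where "N = real (nQ Q n ctheta)"
  have N: "N \<noteq> 0" using nQ_pos[of ctheta] by (simp add: N_def)
  have N2: "NN (- ctheta) = N" by (simp add: NN_def nQ_neg N_def)
  have "G j x = x - ((x + rho) \<bullet> ((1 / N) *\<^sub>R rv theta) - 1) *\<^sub>R (N *\<^sub>R rv ctheta)"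
    by (simp add: j gen_def aff_refl_def tw_root_def tw_coroot_def N_def)
  also have "\<dots> = x - ((x + rho) \<bullet> rv theta - N) *\<^sub>R rv ctheta"
    using N by (simp add: inner_scaleR_right algebra_simps)
  also have "\<dots> = Rf (sj j) x"
    by (simp add: j sj_def Rf_simp phi_simp N2 rv_neg) (simp add: algebra_simps)
  finally show "G j x = Rf (sj j) x" .
  qed
qed

abbreviation W where "W \<equiv> word_map cor rt Q n theta"

lemma W_Nil[simp]: "W [] = id" by (simp add: word_map_def)
lemma W_Cons: "W (j # ws) = W ws \<circ> G j" by (simp add: word_map_def)
lemma W_append: "W (xs @ ys) = W ys \<circ> W xs" by (simp add: word_map_def)
lemma W_single: "W [j] = G j" by (simp add: word_map_def)

lemma G_invol: "G j (G j x) = x"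
proof -
  obtain a c k where s: "sj j = (a,c,k)" by (cases "sj j") auto
  have "(a,c) \<in> RP" using sj_AR[of j] s by simp
  then show ?thesis using Rf_invol gen_eq s by simp
qed

lemma W_rev_inv: "W (rev ws) \<circ> W ws = id"
proof (induction ws)
  case Nil then show ?case by simp
next
  case (Cons j ws)
  have "W (rev (j # ws)) \<circ> W (j # ws) = G j \<circ> (W (rev ws) \<circ> W ws) \<circ> G j"
    by (simp add: W_append W_Cons W_single comp_assoc)
  then show ?case using Cons by (simp add: fun_eq_iff G_invol)
qed

lemma W_inv_rev: "W ws \<circ> W (rev ws) = id"
  using W_rev_inv[of "rev ws"] by simp

lemma W_rev_app: "W (rev ws) (W ws x) = x"
  using W_rev_inv[of ws] by (simp add: fun_eq_iff)
lemma W_app_rev: "W ws (W (rev ws) x) = x"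
  using W_inv_rev[of ws] by (simp add: fun_eq_iff)

fun tr :: "'n afr \<Rightarrow> 'i option list \<Rightarrow> 'n afr" where
  "tr p [] = p" | "tr p (j # ws) = act (sj j) (tr p ws)"

lemma tr_AR: "p \<in> AR \<Longrightarrow> tr p ws \<in> AR"
  by (induction ws) (auto intro: act_AR sj_AR)

lemma phi_act': "p \<in> AR \<Longrightarrow> p' \<in> AR \<Longrightarrow> phi (act p p') x = phi p' (Rf p x)"
  by (cases p; cases p') (simp add: phi_act)

lemma Rf_act': "p \<in> AR \<Longrightarrow> p' \<in> AR \<Longrightarrow> Rf (act p p') = Rf p \<circ> Rf p' \<circ> Rf p"
  by (cases p; cases p') (simp add: Rf_act)

lemma phi_tr: "p \<in> AR \<Longrightarrow> phi (tr p ws) = phi p \<circ> W ws"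
proof (induction ws)
  case Nil then show ?case by simp
next
  case (Cons j ws)
  show ?case
  proof
    fix x
    have "phi (tr p (j # ws)) x = phi (tr p ws) (Rf (sj j) x)"
      using phi_act'[OF sj_AR tr_AR[OF Cons.prems]] by simp
    also have "\<dots> = phi p (W (j # ws) x)" using Cons by (simp add: W_Cons gen_eq)
    finally show "phi (tr p (j # ws)) x = (phi p \<circ> W (j # ws)) x" by simp
  qed
qed

lemma Rf_tr: "p \<in> AR \<Longrightarrow> Rf (tr p ws) = W (rev ws) \<circ> Rf p \<circ> W ws"
proof (induction ws)
  case Nil then show ?case by simp
next
  case (Cons j ws)
  have "Rf (tr p (j # ws)) = Rf (sj j) \<circ> Rf (tr p ws) \<circ> Rf (sj j)"
    using Rf_act'[OF sj_AR tr_AR[OF Cons.prems]] by simp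
  also have "\<dots> = W (rev (j # ws)) \<circ> Rf p \<circ> W (j # ws)"
    using Cons by (simp add: W_append W_Cons W_single gen_eq fun_eq_iff)
  finally show ?case .
qed

end


context rd
begin

section \<open>Positivity\<close>

definition alpha :: "'i option \<Rightarrow> real^'n \<Rightarrow> real" where "alpha j = phi (sj j)"
definition combo :: "('i option \<Rightarrow> real) \<Rightarrow> real^'n \<Rightarrow> real" where
  "combo m x = (\<Sum>l\<in>UNIV. m l * alpha l x)"
definition pos :: "(real^'n \<Rightarrow> real) \<Rightarrow> bool" where
  "pos f \<longleftrightarrow> (\<exists>m. (\<forall>l. m l \<ge> 0) \<and> f = combo m)"
definition neg :: "(real^'n \<Rightarrow> real) \<Rightarrow> bool" where
  "neg f \<longleftrightarrow> pos (\<lambda>x. - f x)"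

lemma sum_opt: "(\<Sum>l\<in>UNIV. (f :: 'i option \<Rightarrow> real) l) = f None + (\<Sum>i\<in>UNIV. f (Some i))"
  by (simp add: UNIV_option_conv sum.reindex)

lemma alpha_Some: "alpha (Some i) x = (x + rho) \<bullet> rv (rt i)"
  by (simp add: alpha_def sj_def phi_simp)
lemma alpha_None: "alpha None x = NN ctheta - (x + rho) \<bullet> rv theta"
  by (simp add: alpha_def sj_def phi_simp NN_def nQ_neg rv_neg)

lemma inner_cX: "(x + rho) \<bullet> rv (cX l) = (\<Sum>i\<in>UNIV. rl l i * alpha (Some i) x)"
  by (simp add: rv_cX inner_sum_right alpha_Some)

lemma theta_inner: "(x + rho) \<bullet> rv theta = (\<Sum>i\<in>UNIV. rl tl i * alpha (Some i) x)"
  by (subst theta_cX) (rule inner_cX)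

lemma combo_expand: "combo m x = m None * alpha None x + (\<Sum>i\<in>UNIV. m (Some i) * alpha (Some i) x)"
  by (simp add: combo_def sum_opt)

lemma combo_add: "combo (\<lambda>l. m l + m' l) x = combo m x + combo m' x"
  by (simp add: combo_def algebra_simps sum.distrib)
lemma combo_neg: "combo (\<lambda>l. - m l) x = - combo m x"
  by (simp add: combo_def sum_negf)
lemma combo_upd: "combo (m(t := v)) x = combo m x + (v - m t) * alpha t x"
proof -
  have "combo (m(t := v)) x = (\<Sum>l\<in>UNIV. m l * alpha l x + (if l = t then (v - m t) * alpha t x else 0))"
    unfolding combo_def by (rule sum.cong) (auto simp: algebra_simps)
  then show ?thesis by (simp add: sum.distrib combo_def)
qed
lemma combo_delta: "(\<forall>l. l \<noteq> t \<longrightarrow> m l = 0) \<Longrightarrow> combo m x = m t * alpha t x"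
proof -
  assume h: "\<forall>l. l \<noteq> t \<longrightarrow> m l = 0"
  have "combo m x = (\<Sum>l\<in>UNIV. if l = t then m t * alpha t x else 0)"
    unfolding combo_def by (rule sum.cong) (use h in auto)
  then show ?thesis by simp
qed

lemma pos_alpha: "pos (alpha j)"
proof -
  have "alpha j = combo (\<lambda>l. if l = j then 1 else 0)"
    by (rule ext, subst combo_delta) auto
  then show ?thesis unfolding pos_def by (intro exI[of _ "\<lambda>l. if l = j then 1 else 0"]) auto
qed

lemma UQ:
  assumes z: "\<And>x. combo m x = 0"
  shows "m l = 0"
proof -
  have "combo m (- rho) = m None * NN ctheta" by (simp add: combo_expand alpha_Some alpha_None)
  then have mN: "m None = 0" using z[of "- rho"] NN_pos[of ctheta] by simp
  define V where "V = (\<Sum>i\<in>UNIV. m (Some i) *\<^sub>R rv (rt i))"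
  have cV: "combo m x = (x + rho) \<bullet> V" for x
    by (simp add: combo_expand mN alpha_Some V_def inner_sum_right)
  have "V \<bullet> V = 0" using cV[of "V - rho"] z[of "V - rho"] by simp
  then have "V = 0" by simp
  then have "(\<lambda>i. m (Some i)) = (\<lambda>_. 0)" by (intro indep_real) (simp add: V_def)
  then show ?thesis using mN by (cases l) (auto simp: fun_eq_iff)
qed

lemma phi_nz: "p \<in> AR \<Longrightarrow> \<exists>x. phi p x \<noteq> 0"
proof -
  assume p: "p \<in> AR"
  obtain a c k where pd: "p = (a,c,k)" by (cases p) auto
  have h: "(a,c) \<in> RP" using p pd by simp
  have "phi p (- rho) = - of_int k * NN c" by (simp add: pd phi_simp)
  moreover have "phi p (rv c - rho) = 2 - of_int k * NN c" using RP_pair_real[OF h] by (simp add: pd phi_simp inner_commute)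
  ultimately show ?thesis
  proof (rule_tac ccontr)
    assume a: "phi p (- rho) = - of_int k * NN c" "phi p (rv c - rho) = 2 - of_int k * NN c"
      "\<not> (\<exists>x. phi p x \<noteq> 0)"
    then have "phi p (- rho) = 0" "phi p (rv c - rho) = 0" by auto
    then show False using a(1,2) by linarith
  qed
qed

lemma excl: "pos f \<Longrightarrow> neg f \<Longrightarrow> f x = 0"
proof -
  assume "pos f" "neg f"
  then obtain m m' where m: "\<forall>l. m l \<ge> 0" "f = combo m" and m': "\<forall>l. m' l \<ge> 0" "(\<lambda>x. - f x) = combo m'"
    unfolding pos_def neg_def by blast
  have "combo (\<lambda>l. m l + m' l) y = 0" for y
  proof -
    have c1: "combo m y = f y" using m(2) by simp
    have c2: "combo m' y = - f y" using fun_cong[OF m'(2), of y] by simp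
    show ?thesis by (simp add: combo_add c1 c2)
  qed
  then have "\<And>l. m l + m' l = 0" by (rule UQ)
  then have "\<And>l. m l = 0" using m(1) m'(1) by (meson add_nonneg_eq_0_iff)
  then show "f x = 0" using m(2) by (simp add: combo_def)
qed

lemma excl_AR: "p \<in> AR \<Longrightarrow> pos (phi p) \<Longrightarrow> neg (phi p) \<Longrightarrow> False"
  using phi_nz excl by metis

lemma coh:
  assumes p: "p \<in> AR"
  shows "pos (phi p) \<or> neg (phi p)"
proof -
  obtain a c k where pd: "p = (a,c,k)" by (cases p) auto
  have h: "(a,c) \<in> RP" using p pd by simp
  obtain l where al: "a = cX l" and lc: "(\<forall>k. l k \<ge> 0) \<or> (\<forall>k. l k \<le> 0)" using RP_coherent[OF h] by blast
  define Nc where "Nc = NN c"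
  define Nt where "Nt = NN ctheta"
  have Ncp: "Nc > 0" "Nt > 0" using NN_pos Nc_def Nt_def by auto
  define T where "T = (\<lambda>i. Nc * rl tl i / Nt)"
  have T0: "T i \<ge> 0" for i using tl_pos[of i] Ncp by (simp add: T_def rl_def)
  define m where "m = (\<lambda>j. case j of None \<Rightarrow> - of_int k * Nc / Nt | Some i \<Rightarrow> rl l i - of_int k * T i)"
  have E: "phi p = combo m"
  proof
    fix x
    define S where "S = (\<Sum>i\<in>UNIV. rl tl i * alpha (Some i) x)"
    define Aa where "Aa = (\<Sum>i\<in>UNIV. rl l i * alpha (Some i) x)"
    define K where "K = of_int k * Nc"
    have A0: "alpha None x = Nt - S" unfolding S_def Nt_def by (simp only: alpha_None theta_inner)
    have C: "combo m x = (- K / Nt) * alpha None x + (\<Sum>i\<in>UNIV. (rl l i - of_int k * T i) * alpha (Some i) x)"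
    proof -
      have mN: "m None = - K / Nt" by (simp add: m_def K_def)
      have mS: "\<And>i. m (Some i) = rl l i - of_int k * T i" by (simp add: m_def)
      show ?thesis by (simp only: combo_expand mN mS)
    qed
    have P: "phi p x = Aa - K" unfolding Aa_def K_def Nc_def
      by (simp only: pd phi_simp al inner_cX)
    have S1: "(\<Sum>i\<in>UNIV. (rl l i - of_int k * T i) * alpha (Some i) x) =
        Aa - (\<Sum>i\<in>UNIV. (K / Nt) * (rl tl i * alpha (Some i) x))"
      unfolding Aa_def sum_subtractf[symmetric]
      by (rule sum.cong) (simp_all add: left_diff_distrib T_def K_def mult.assoc)
    have S2: "(\<Sum>i\<in>UNIV. (K / Nt) * (rl tl i * alpha (Some i) x)) = (K / Nt) * S"
      unfolding S_def by (rule sum_distrib_left[symmetric])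
    have alg: "(- K / Nt) * (Nt - S) + (Aa - (K / Nt) * S) = Aa - K" using Ncp(2) by (simp add: field_simps)
    show "phi p x = combo m x" using C A0 S1 S2 P alg by simp
  qed
  have negE: "(\<lambda>x. - phi p x) = combo (\<lambda>j. - m j)" using E by (simp add: combo_neg fun_eq_iff)
  from lc show ?thesis
  proof
    assume lp: "\<forall>k. l k \<ge> 0"
    have HRi: "rl l i \<le> T i" for i
    proof -
      have "rl l i / Nc \<le> rl tl i / Nt" using HR[OF h al, of i] Nc_def Nt_def NN_def by simp
      then show ?thesis using Ncp by (simp add: T_def field_simps)
    qed
    show ?thesis
    proof (cases "k \<le> 0")
      case True
      have "\<forall>j. m j \<ge> 0"
      proof
        fix j show "m j \<ge> 0"
        proof (cases j)
          case None then show ?thesis using True Ncp by (simp add: m_def mult_nonpos_nonneg divide_nonpos_pos)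
        next
          case (Some i)
          have "of_int k * T i \<le> 0" using True T0[of i] by (simp add: mult_nonpos_nonneg)
          moreover have "rl l i \<ge> 0" using lp by (simp add: rl_def)
          ultimately show ?thesis using Some by (simp add: m_def)
        qed
      qed
      then show ?thesis unfolding pos_def using E by (intro disjI1 exI[of _ m]) simp
    next
      case False
      have "\<forall>j. - m j \<ge> 0"
      proof
        fix j show "- m j \<ge> 0"
        proof (cases j)
          case None then show ?thesis using False Ncp by (simp add: m_def)
        next
          case (Some i)
          have "of_int k * T i \<ge> T i" using False T0[of i] by (simp add: mult_le_cancel_right1)
          then show ?thesis using Some HRi[of i] by (simp add: m_def)
        qed
      qed
      then show ?thesis unfolding neg_def pos_def using negE by (intro disjI2 exI[of _ "\<lambda>j. - m j"]) simp
    qed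
  next
    assume ln: "\<forall>k. l k \<le> 0"
    have h2: "(-a, -c) \<in> RP" using RP_neg[OF h] .
    have al2: "-a = cX (\<lambda>i. - l i)" using al by (simp add: cX_def sum_negf vec_eq_iff)
    have HRi: "- rl l i \<le> T i" for i
    proof -
      have "rl (\<lambda>i. - l i) i / real (nQ Q n (-c)) \<le> rl tl i / real (nQ Q n ctheta)" using HR[OF h2 al2, of i] .
      then have "- rl l i / Nc \<le> rl tl i / Nt" using Nc_def Nt_def NN_def nQ_neg by (simp add: rl_def)
      then show ?thesis using Ncp by (simp add: T_def field_simps)
    qed
    show ?thesis
    proof (cases "k \<ge> 0")
      case True
      have "\<forall>j. - m j \<ge> 0"
      proof
        fix j show "- m j \<ge> 0"
        proof (cases j)
          case None then show ?thesis using True Ncp by (simp add: m_def)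
        next
          case (Some i)
          have "of_int k * T i \<ge> 0" using True T0[of i] by simp
          moreover have "rl l i \<le> 0" using ln by (simp add: rl_def)
          ultimately show ?thesis using Some by (simp add: m_def)
        qed
      qed
      then show ?thesis unfolding neg_def pos_def using negE by (intro disjI2 exI[of _ "\<lambda>j. - m j"]) simp
    next
      case False
      have "\<forall>j. m j \<ge> 0"
      proof
        fix j show "m j \<ge> 0"
        proof (cases j)
          case None then show ?thesis using False Ncp by (simp add: m_def mult_nonpos_nonneg divide_nonpos_pos)
        next
          case (Some i)
          have "1 \<le> - (of_int k :: real)" using False by simp
          then have "1 * T i \<le> (- of_int k) * T i" using T0[of i] by (rule mult_right_mono)
          then have "- of_int k * T i \<ge> T i" by simp
          then show ?thesis using Some HRi[of i] by (simp add: m_def)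
        qed
      qed
      then show ?thesis unfolding pos_def using E by (intro disjI1 exI[of _ m]) simp
    qed
  qed
qed

end


context rd
begin

definition kap :: "'i option \<Rightarrow> 'i option \<Rightarrow> real" where
  "kap t l = rv (fst (snd (sj t))) \<bullet> rv (fst (sj l))"

lemma alpha_G: "alpha l (G t x) = alpha l x - alpha t x * kap t l"
proof -
  obtain at1 ct1 kt1 where st: "sj t = (at1,ct1,kt1)" by (cases "sj t") auto
  obtain al cl kl where sl: "sj l = (al,cl,kl)" by (cases "sj l") auto
  have "alpha l (G t x) = phi (al,cl,kl) (x - alpha t x *\<^sub>R rv ct1)"
    by (simp add: gen_eq alpha_def st sl Rf_simp)
  also have "\<dots> = alpha l x - alpha t x * kap t l"
    by (simp add: phi_shift alpha_def sl kap_def st)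
  finally show ?thesis .
qed

lemma combo_G: "combo m (G t x) = combo (m(t := m t - (\<Sum>l\<in>UNIV. m l * kap t l))) x"
proof -
  have "combo m (G t x) = (\<Sum>l\<in>UNIV. m l * alpha l x - alpha t x * (m l * kap t l))"
    unfolding combo_def by (rule sum.cong) (auto simp: alpha_G algebra_simps)
  also have "\<dots> = combo m x - alpha t x * (\<Sum>l\<in>UNIV. m l * kap t l)"
    by (simp add: sum_subtractf combo_def sum_distrib_left)
  finally show ?thesis by (simp add: combo_upd algebra_simps)
qed

lemma alpha_nz: "\<exists>x. alpha j x \<noteq> 0" using phi_nz[OF sj_AR] by (simp add: alpha_def)

lemma SF:
  assumes p: "p \<in> AR" and ps: "pos (phi p)" and ng: "neg (\<lambda>x. phi p (G t x))"
  shows "\<exists>C>0. \<forall>x. phi p x = C * alpha t x"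
proof -
  obtain m where m: "\<forall>l. m l \<ge> 0" "phi p = combo m" using ps unfolding pos_def by blast
  obtain nn where nn: "\<forall>l. nn l \<ge> 0" "(\<lambda>x. - phi p (G t x)) = combo nn" using ng unfolding neg_def pos_def by blast
  define m' where "m' = m(t := m t - (\<Sum>l\<in>UNIV. m l * kap t l))"
  have e1: "phi p (G t x) = combo m' x" for x using m(2) combo_G m'_def by simp
  have e2: "combo nn x = - phi p (G t x)" for x using fun_cong[OF nn(2), of x] by simp
  have "combo (\<lambda>l. m' l + nn l) x = 0" for x by (simp add: combo_add e1[symmetric] e2)
  then have z: "\<And>l. m' l + nn l = 0" by (rule UQ)
  have mz: "\<forall>l. l \<noteq> t \<longrightarrow> m l = 0"
  proof (intro allI impI)
    fix l assume "l \<noteq> t"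
    then have "m l + nn l = 0" using z[of l] by (simp add: m'_def)
    then show "m l = 0" using m(1) nn(1) by (meson add_nonneg_eq_0_iff)
  qed
  have ph: "phi p x = m t * alpha t x" for x using m(2) combo_delta[OF mz] by simp
  have "m t \<noteq> 0"
  proof
    assume "m t = 0"
    then have "\<forall>x. phi p x = 0" using ph by simp
    then show False using phi_nz[OF p] by blast
  qed
  then have "m t > 0" using m(1) by (simp add: order_less_le)
  then show ?thesis using ph by blast
qed

lemma K2:
  assumes p: "p \<in> AR" and p': "p' \<in> AR" and eq: "\<And>x. phi p x = C * phi p' x" and C: "C > 0"
  shows "p = p'"
proof -
  obtain a c k where pd: "p = (a,c,k)" by (cases p) auto
  obtain a' c' k' where pd': "p' = (a',c',k')" by (cases p') auto
  have h: "(a,c) \<in> RP" "(a',c') \<in> RP" using p p' pd pd' by auto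
  have lin: "v \<bullet> rv a = C * (v \<bullet> rv a')" for v
  proof -
    have "phi p (v - rho) - phi p (- rho) = v \<bullet> rv a" by (simp add: pd phi_simp)
    moreover have "phi p' (v - rho) - phi p' (- rho) = v \<bullet> rv a'" by (simp add: pd' phi_simp)
    ultimately show ?thesis using eq[of "v - rho"] eq[of "- rho"] by (simp add: algebra_simps)
  qed
  define u where "u = rv a - C *\<^sub>R rv a'"
  have "u \<bullet> u = 0" using lin[of u] by (simp add: u_def inner_diff_right)
  then have "rv a = C *\<^sub>R rv a'" by (simp add: u_def)
  then have aa: "a = a'" and C1: "C = 1" using reduced[OF h(1) h(2)] C by auto
  have cc: "c = c'" using coroot_unique h aa by blast
  have "phi p (- rho) = C * phi p' (- rho)" by (rule eq)
  then have "of_int k * NN c = of_int k' * NN c" using C1 cc by (simp add: pd pd' phi_simp)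
  then have "k = k'" using NN_pos[of c] by simp
  then show ?thesis using pd pd' aa cc by simp
qed

lemma alpha_W_tr: "(\<lambda>x. alpha j (W ws x)) = phi (tr (sj j) ws)"
  using phi_tr[OF sj_AR, of j ws] by (simp add: alpha_def fun_eq_iff)

lemma coh_W: "pos (\<lambda>x. alpha j (W ws x)) \<or> neg (\<lambda>x. alpha j (W ws x))"
  unfolding alpha_W_tr using coh[OF tr_AR[OF sj_AR]] .

lemma excl_W: "pos (\<lambda>x. alpha j (W ws x)) \<Longrightarrow> neg (\<lambda>x. alpha j (W ws x)) \<Longrightarrow> False"
  unfolding alpha_W_tr using excl_AR[OF tr_AR[OF sj_AR]] by blast

lemma DL: "neg (\<lambda>x. alpha j (W ws x)) \<Longrightarrow> \<exists>ws'. length ws' + 1 = length ws \<and> set ws' \<subseteq> set ws \<and> W ws' = G j \<circ> W ws"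
proof (induction ws)
  case Nil
  then have "neg (alpha j)" by simp
  then have "\<forall>x. alpha j x = 0" using excl pos_alpha by blast
  then show ?case using alpha_nz by blast
next
  case (Cons t ws)
  define p' where "p' = tr (sj j) ws"
  have p'AR: "p' \<in> AR" by (simp add: p'_def tr_AR sj_AR)
  have ph: "phi p' = (\<lambda>x. alpha j (W ws x))" using alpha_W_tr p'_def by simp
  have WC: "W (t # ws) x = W ws (G t x)" for x by (simp add: W_Cons)
  from coh_W[of j ws] show ?case
  proof
    assume ng: "neg (\<lambda>x. alpha j (W ws x))"
    obtain ws'' where w'': "length ws'' + 1 = length ws" "set ws'' \<subseteq> set ws" "W ws'' = G j \<circ> W ws"
      using Cons.IH[OF ng] by blast
    have "W (t # ws'') = G j \<circ> W (t # ws)" using w''(3) by (simp add: W_Cons comp_assoc)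
    then show ?case using w'' by (intro exI[of _ "t # ws''"]) auto
  next
    assume ps: "pos (\<lambda>x. alpha j (W ws x))"
    have ng: "neg (\<lambda>x. phi p' (G t x))" using Cons.prems by (simp add: ph WC)
    obtain C where C: "C > 0" "\<forall>x. phi p' x = C * alpha t x" using SF[OF p'AR _ ng] ps ph by auto
    have "p' = sj t" using K2[OF p'AR sj_AR] C by (simp add: alpha_def)
    then have "Rf p' = G t" by (simp add: gen_eq)
    moreover have "Rf p' = W (rev ws) \<circ> G j \<circ> W ws" using Rf_tr[OF sj_AR] by (simp add: p'_def gen_eq)
    ultimately have e: "W (rev ws) (G j (W ws y)) = G t y" for y by (metis comp_apply)
    have "G j (W ws y) = W ws (G t y)" for y using e[of y] W_app_rev[of ws "G j (W ws y)"] by simp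
    then have "G j (W (t # ws) x) = W ws x" for x by (simp add: WC G_invol)
    then have "W ws = G j \<circ> W (t # ws)" by (simp add: fun_eq_iff)
    then show ?case by (intro exI[of _ ws]) auto
  qed
qed

abbreviation L where "L \<equiv> Defs.len cor rt Q n theta"

lemma L_le: "W ws = w \<Longrightarrow> L w \<le> length ws"
  unfolding Defs.len_def by (rule Least_le) auto

lemma L_ex: "\<exists>ws. length ws = L (W vs) \<and> W ws = W vs"
  unfolding Defs.len_def by (rule LeastI_ex) auto

lemma crit_neg: "neg (\<lambda>x. alpha j (W ws x)) \<Longrightarrow> L (G j \<circ> W ws) < L (W ws)"
proof -
  assume ng: "neg (\<lambda>x. alpha j (W ws x))"
  obtain ws0 where w0: "length ws0 = L (W ws)" "W ws0 = W ws" using L_ex by blast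
  have "neg (\<lambda>x. alpha j (W ws0 x))" using ng w0(2) by simp
  then obtain ws' where w': "length ws' + 1 = length ws0" "W ws' = G j \<circ> W ws0" using DL by blast
  have "L (G j \<circ> W ws) \<le> length ws'" using w'(2) w0(2) L_le by metis
  then show ?thesis using w' w0 by simp
qed

lemma alpha_self: "alpha j (G j x) = - alpha j x"
  using alpha_G[of j j x] kap_def
proof -
  obtain a c k where s: "sj j = (a,c,k)" by (cases "sj j") auto
  have "(a,c) \<in> RP" using sj_AR[of j] s by simp
  then show ?thesis using phi_Rf by (simp add: alpha_def gen_eq s)
qed

lemma crit_pos: "pos (\<lambda>x. alpha j (W ws x)) \<Longrightarrow> L (W ws) < L (G j \<circ> W ws)"
proof -
  assume ps: "pos (\<lambda>x. alpha j (W ws x))"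
  have Wa: "W (ws @ [j]) = G j \<circ> W ws" by (simp add: W_append W_single)
  have "neg (\<lambda>x. alpha j (W (ws @ [j]) x))" using ps unfolding neg_def by (simp add: Wa alpha_self)
  then have "L (G j \<circ> W (ws @ [j])) < L (W (ws @ [j]))" by (rule crit_neg)
  moreover have "G j \<circ> W (ws @ [j]) = W ws" by (simp add: Wa fun_eq_iff G_invol)
  ultimately show ?thesis using Wa by simp
qed

lemma W_inv_eq: "W vs = W ws \<Longrightarrow> W (rev vs) = W (rev ws)"
proof -
  assume e: "W vs = W ws"
  have "W (rev vs) = W (rev vs) \<circ> (W ws \<circ> W (rev ws))" by (simp add: W_inv_rev)
  also have "\<dots> = (W (rev vs) \<circ> W vs) \<circ> W (rev ws)" by (simp add: e comp_assoc)
  also have "\<dots> = W (rev ws)" by (simp add: W_rev_inv)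
  finally show ?thesis .
qed

lemma L_rev_le: "L (W (rev ws)) \<le> L (W ws)"
proof -
  obtain ws0 where w0: "length ws0 = L (W ws)" "W ws0 = W ws" using L_ex by blast
  have "W (rev ws0) = W (rev ws)" using W_inv_eq[OF w0(2)] .
  then have "L (W (rev ws)) \<le> length (rev ws0)" using L_le by metis
  then show ?thesis using w0 by simp
qed

lemma L_rev: "L (W (rev ws)) = L (W ws)"
  using L_rev_le[of ws] L_rev_le[of "rev ws"] by simp

lemma crit_left_neg: "neg (\<lambda>x. alpha j (W (rev ws) x)) \<Longrightarrow> L (W ws \<circ> G j) < L (W ws)"
proof -
  assume ng: "neg (\<lambda>x. alpha j (W (rev ws) x))"
  have "L (W ws \<circ> G j) = L (W (j # ws))" by (simp add: W_Cons)
  also have "\<dots> = L (W (rev (j # ws)))" by (rule L_rev[symmetric])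
  also have "W (rev (j # ws)) = G j \<circ> W (rev ws)" by (simp add: W_append W_single)
  also have "L (G j \<circ> W (rev ws)) < L (W (rev ws))" using ng by (rule crit_neg)
  also have "\<dots> = L (W ws)" by (rule L_rev)
  finally show ?thesis .
qed

lemma crit_left_pos: "pos (\<lambda>x. alpha j (W (rev ws) x)) \<Longrightarrow> L (W ws) < L (W ws \<circ> G j)"
proof -
  assume ps: "pos (\<lambda>x. alpha j (W (rev ws) x))"
  have "L (W ws) = L (W (rev ws))" by (rule L_rev[symmetric])
  also have "\<dots> < L (G j \<circ> W (rev ws))" using ps by (rule crit_pos)
  also have "G j \<circ> W (rev ws) = W (rev (j # ws))" by (simp add: W_append W_single)
  also have "L (W (rev (j # ws))) = L (W (j # ws))" by (rule L_rev)
  also have "W (j # ws) = W ws \<circ> G j" by (simp add: W_Cons)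
  finally show ?thesis .
qed

lemma Jspan:
  assumes "set xs \<subseteq> J" "j \<in> J"
  shows "\<exists>m. (\<forall>l. l \<notin> J \<longrightarrow> m l = 0) \<and> (\<forall>x. alpha j (W xs x) = combo m x)"
  using assms(1)
proof (induction xs)
  case Nil
  have "\<forall>x. alpha j x = combo (\<lambda>l. if l = j then 1 else 0) x" by (subst combo_delta) auto
  then show ?case using assms(2) by (intro exI[of _ "\<lambda>l. if l = j then 1 else 0"]) auto
next
  case (Cons t xs)
  then obtain m where m: "\<forall>l. l \<notin> J \<longrightarrow> m l = 0" "\<forall>x. alpha j (W xs x) = combo m x" by auto
  have tJ: "t \<in> J" using Cons.prems by simp
  define m' where "m' = m(t := m t - (\<Sum>l\<in>UNIV. m l * kap t l))"
  have "\<forall>x. alpha j (W (t # xs) x) = combo m' x" using m(2) by (simp add: W_Cons combo_G m'_def)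
  moreover have "\<forall>l. l \<notin> J \<longrightarrow> m' l = 0" using m(1) tJ by (simp add: m'_def)
  ultimately show ?case by blast
qed

end


context rd
begin

lemma bruhat_len: "bruhat_less cor rt Q n theta u w \<Longrightarrow> L u < L w"
  unfolding bruhat_less_def
proof (induction rule: trancl_induct)
  case (base y) then show ?case by auto
next
  case (step y z) then show ?case by auto
qed

lemma tr_k: "set ws \<subseteq> range Some \<Longrightarrow> snd (snd (tr (sj (Some i)) ws)) = 0"
proof (induction ws)
  case Nil then show ?case by (simp add: sj_def)
next
  case (Cons t ws)
  then obtain j where tj: "t = Some j" by auto
  obtain a c k where e: "tr (sj (Some i)) ws = (a,c,k)" by (cases "tr (sj (Some i)) ws") auto
  have k0: "k = 0" using Cons e by simp
  have "tr (sj (Some i)) (t # ws) = act (sj (Some j)) (a,c,k)" by (simp only: tj e tr.simps)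
  then show ?case by (simp add: sj_def act_simp k0)
qed

lemma tr_Q: "p \<in> AR \<Longrightarrow> Q (fst (snd (tr p ws))) = Q (fst (snd p))"
proof (induction ws)
  case Nil then show ?case by simp
next
  case (Cons t ws)
  obtain a c k where e: "tr p ws = (a,c,k)" by (cases "tr p ws") auto
  obtain a1 c1 k1 where s: "sj t = (a1,c1,k1)" by (cases "sj t") auto
  have h: "(a1,c1) \<in> RP" using sj_AR[of t] s by simp
  have "Q (fst (snd (tr p (t # ws)))) = Q (rY a1 c1 c)" by (simp add: e s act_simp)
  also have "\<dots> = Q c" by (rule Q_rY[OF h])
  finally show ?case using Cons e by simp
qed

lemma G_Some: "G (Some i) x = x - alpha (Some i) x *\<^sub>R rv (cor i)"
  by (simp add: gen_eq alpha_def sj_def Rf_simp)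

lemma pos_combo_lemma:
  assumes h: "(b,cb) \<in> RP" and pc: "\<forall>x. f x = (x + rho) \<bullet> rv b" and b: "b = cX l"
  shows "(\<forall>k. l k \<ge> 0) \<Longrightarrow> pos f" and "(\<forall>k. l k \<le> 0) \<Longrightarrow> neg f"
proof -
  define m where "m = (\<lambda>j. case j of None \<Rightarrow> 0 | Some i \<Rightarrow> rl l i)"
  have fe: "f = combo m"
    by (rule ext) (simp add: pc combo_expand m_def b inner_cX)
  show "(\<forall>k. l k \<ge> 0) \<Longrightarrow> pos f"
  proof -
    assume "\<forall>k. l k \<ge> 0"
    then have "\<forall>j. m j \<ge> 0" by (auto simp: m_def rl_def split: option.splits)
    then show ?thesis unfolding pos_def using fe by (intro exI[of _ m]) simp
  qed
  show "(\<forall>k. l k \<le> 0) \<Longrightarrow> neg f"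
  proof -
    assume "\<forall>k. l k \<le> 0"
    then have "\<forall>j. - m j \<ge> 0" by (auto simp: m_def rl_def split: option.splits)
    moreover have "(\<lambda>x. - f x) = combo (\<lambda>j. - m j)" using fe by (simp add: combo_neg fun_eq_iff)
    ultimately show ?thesis unfolding neg_def pos_def by (intro exI[of _ "\<lambda>j. - m j"]) simp
  qed
qed

lemma main:
  fixes sigma :: "real^'n \<Rightarrow> real^'n" and eta :: "real^'n" and J :: "'i option set"
  assumes eta: "eta \<in> alcove_minus cor rt Q n"
    and stab: "parabolic cor rt Q n theta J = stabilizer cor rt Q n theta eta"
    and sigma: "sigma \<in> Wfin cor rt Q n theta \<inter> min_reps cor rt Q n theta J"
  shows "let mu = sigma eta;
               p = (mu + rhoc cor rt) \<bullet> rv (rt i);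
               N = real (nQ Q n (cor i));
               si = gmult sigma (gen cor rt Q n theta (Some i))
           in (si \<in> min_reps cor rt Q n theta J \<and> bruhat_less cor rt Q n theta sigma si
                  \<longrightarrow> - N < p \<and> p < 0)
            \<and> (si \<in> min_reps cor rt Q n theta J \<and> bruhat_less cor rt Q n theta si sigma
                  \<longrightarrow> 0 < p \<and> p < N)
            \<and> (si \<notin> min_reps cor rt Q n theta J \<longleftrightarrow> p = 0)"
proof -
  obtain ws where ws: "sigma = W ws" "set ws \<subseteq> range Some" using sigma unfolding Wfin_def by blast
  have smin: "\<forall>j\<in>J. L (sigma \<circ> G j) > L sigma" using sigma unfolding min_reps_def gmult_def by blast
  define si where "si = G (Some i) \<circ> sigma"
  have siW: "si = W (ws @ [Some i])" by (simp add: si_def ws W_append W_single)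
  define p where "p = (sigma eta + rhoc cor rt) \<bullet> rv (rt i)"
  have p_alpha: "p = alpha (Some i) (sigma eta)" by (simp add: p_def alpha_Some)
  have siWaff: "si \<in> Waff cor rt Q n theta" using siW by (simp add: Waff_def)
  have minr: "si \<in> min_reps cor rt Q n theta J \<longleftrightarrow> (\<forall>j\<in>J. L (si \<circ> G j) > L si)"
    using siWaff unfolding min_reps_def gmult_def by blast
  have Winv: "W (rev ws) (sigma x) = x" for x by (simp add: ws W_rev_app)
  have c3a: "\<not> (\<forall>j\<in>J. L (si \<circ> G j) > L si) \<Longrightarrow> p = 0"
  proof -
    assume "\<not> (\<forall>j\<in>J. L (si \<circ> G j) > L si)"
    then obtain j where jJ: "j \<in> J" and le: "\<not> L (si \<circ> G j) > L si" by blast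
    have ps: "pos (\<lambda>x. alpha j (W (rev ws) x))"
    proof -
      have "\<not> neg (\<lambda>x. alpha j (W (rev ws) x))" using crit_left_neg[of j ws] smin jJ ws(1) by fastforce
      then show ?thesis using coh_W by blast
    qed
    have ng: "neg (\<lambda>x. alpha j (W (rev ws) (G (Some i) x)))"
    proof -
      have "\<not> pos (\<lambda>x. alpha j (W (rev (ws @ [Some i])) x))" using crit_left_pos[of j "ws @ [Some i]"] le siW by fastforce
      moreover have "W (rev (ws @ [Some i])) = W (rev ws) \<circ> G (Some i)" by (simp add: W_Cons)
      ultimately show ?thesis using coh_W[of j "rev (ws @ [Some i])"] by simp
    qed
    have f_tr: "(\<lambda>x. alpha j (W (rev ws) x)) = phi (tr (sj j) (rev ws))" by (rule alpha_W_tr)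
    have ps': "pos (phi (tr (sj j) (rev ws)))" using ps f_tr by simp
    have ng': "neg (\<lambda>x. phi (tr (sj j) (rev ws)) (G (Some i) x))" using ng by (simp add: f_tr[symmetric])
    obtain C where C0: "C > 0" "\<forall>x. phi (tr (sj j) (rev ws)) x = C * alpha (Some i) x"
      using SF[OF tr_AR[OF sj_AR] ps' ng'] by blast
    have C: "C > 0" "\<forall>x. alpha j (W (rev ws) x) = C * alpha (Some i) x"
      using C0 f_tr by (auto simp: fun_eq_iff)
    have Gj: "G j \<in> parabolic cor rt Q n theta J" unfolding parabolic_def
      using jJ by (intro CollectI exI[of _ "[j]"]) (simp add: W_single)
    then have "G j eta = eta" using stab unfolding stabilizer_def by blast
    then have "alpha j eta = - alpha j eta" using alpha_self[of j eta] by simp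
    then have aj: "alpha j eta = 0" by simp
    have "alpha j (W (rev ws) (sigma eta)) = C * alpha (Some i) (sigma eta)" using C(2) by blast
    then have "C * p = 0" using aj Winv p_alpha by simp
    then show "p = 0" using C(1) by simp
  qed
  have c3b: "p = 0 \<Longrightarrow> \<not> (\<forall>j\<in>J. L (si \<circ> G j) > L si)"
  proof -
    assume p0: "p = 0"
    have fix1: "G (Some i) (sigma eta) = sigma eta" using p0 p_alpha by (simp add: G_Some)
    define t where "t = W (ws @ [Some i] @ rev ws)"
    have tx: "t x = W (rev ws) (G (Some i) (W ws x))" for x by (simp add: t_def W_append W_single W_Cons)
    have "t eta = eta" using tx fix1 ws(1) Winv by simp
    moreover have "t \<in> Waff cor rt Q n theta" by (simp add: t_def Waff_def)
    ultimately have "t \<in> parabolic cor rt Q n theta J" using stab unfolding stabilizer_def by blast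
    then have exJ: "\<exists>xs. set xs \<subseteq> J \<and> W xs = t" unfolding parabolic_def by blast
    obtain xs where xs: "set xs \<subseteq> J \<and> W xs = t" and xmin: "\<And>ys. set ys \<subseteq> J \<and> W ys = t \<Longrightarrow> length xs \<le> length ys"
      using ex_has_least_nat[of "\<lambda>xs. set xs \<subseteq> J \<and> W xs = t"] exJ by metis
    have trev: "W (rev xs) = t"
    proof -
      have "W (rev xs) = W (rev (ws @ [Some i] @ rev ws))" using xs W_inv_eq t_def by blast
      then show ?thesis by (simp add: t_def)
    qed
    have "xs \<noteq> []"
    proof
      assume "xs = []"
      then have "t = id" using xs by simp
      then have "G (Some i) y = y" for y
      proof -
        assume t1: "t = id"
        have e: "W (rev ws) y = W (rev ws) (G (Some i) y)" using tx[of "W (rev ws) y"] t1 W_app_rev[of ws] by simp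
        have "W ws (W (rev ws) (G (Some i) y)) = W ws (W (rev ws) y)" using e by simp
        then show ?thesis by (simp add: W_app_rev)
      qed
      then have "alpha (Some i) y = 0" for y using alpha_self[of "Some i" y] by simp
      then show False using alpha_nz by blast
    qed
    then obtain x1 xr where xd: "xs = x1 # xr" by (cases xs) auto
    have x1J: "x1 \<in> J" and xrJ: "set xr \<subseteq> J" using xs xd by auto
    have Wrevxs: "W (rev xs) = G x1 \<circ> W (rev xr)" by (simp add: xd W_append W_single)
    have psr: "pos (\<lambda>x. alpha x1 (W (rev xr) x))"
    proof (rule ccontr)
      assume "\<not> pos (\<lambda>x. alpha x1 (W (rev xr) x))"
      then have "neg (\<lambda>x. alpha x1 (W (rev xr) x))" using coh_W by blast
      then obtain zs where zs: "length zs + 1 = length (rev xr)" "set zs \<subseteq> set (rev xr)" "W zs = G x1 \<circ> W (rev xr)"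
        using DL by blast
      have "W zs = W (rev xs)" using zs(3) Wrevxs by simp
      then have "W (rev zs) = W (rev (rev xs))" by (rule W_inv_eq)
      then have "W (rev zs) = t" using xs by simp
      moreover have "set (rev zs) \<subseteq> J" using zs(2) xrJ by auto
      ultimately have "length xs \<le> length (rev zs)" using xmin by blast
      then show False using zs(1) xd by simp
    qed
    obtain mJ where mJ: "\<forall>l. l \<notin> J \<longrightarrow> mJ l = 0" "\<forall>x. alpha x1 (W (rev xr) x) = combo mJ x"
      using Jspan[of "rev xr" J x1] xrJ x1J by auto
    obtain m0 where m0: "\<forall>l. m0 l \<ge> 0" "(\<lambda>x. alpha x1 (W (rev xr) x)) = combo m0" using psr unfolding pos_def by blast
    have mJm0: "mJ l = m0 l" for l
    proof -
      have eqc: "combo mJ x = combo m0 x" for x using mJ(2) fun_cong[OF m0(2), of x] by simp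
      have "combo (\<lambda>l. mJ l + - m0 l) x = 0" for x
        by (simp only: combo_add combo_neg eqc add.right_inverse)
      then have "mJ l + - m0 l = 0" by (rule UQ)
      then show ?thesis by simp
    qed
    have Mex: "\<forall>k\<in>J. \<exists>Mk. (\<forall>l. Mk l \<ge> 0) \<and> (\<lambda>x. alpha k (W (rev ws) x)) = combo Mk"
    proof
      fix k assume kJ: "k \<in> J"
      have "\<not> neg (\<lambda>x. alpha k (W (rev ws) x))" using crit_left_neg[of k ws] smin kJ ws(1) by fastforce
      then have "pos (\<lambda>x. alpha k (W (rev ws) x))" using coh_W by blast
      then show "\<exists>Mk. (\<forall>l. Mk l \<ge> 0) \<and> (\<lambda>x. alpha k (W (rev ws) x)) = combo Mk" unfolding pos_def by blast
    qed
    then obtain M where M: "\<forall>k\<in>J. (\<forall>l. M k l \<ge> 0) \<and> (\<lambda>x. alpha k (W (rev ws) x)) = combo (M k)"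
      by metis
    define Mt where "Mt = (\<lambda>l. \<Sum>k\<in>UNIV. mJ k * M k l)"
    have Mt0: "Mt l \<ge> 0" for l
      unfolding Mt_def
    proof (rule sum_nonneg)
      fix k show "0 \<le> mJ k * M k l"
        by (cases "k \<in> J") (use M m0(1) mJm0 mJ(1) in auto)
    qed
    have key: "alpha x1 (W (rev (ws @ [Some i])) x) = - combo Mt x" for x
    proof -
      define y where "y = W (rev ws) x"
      have "W (rev (ws @ [Some i])) x = W (rev ws) (G (Some i) x)" by (simp add: W_Cons)
      also have "\<dots> = t (W (rev ws) x)" using tx W_app_rev[of ws x] by simp
      also have "\<dots> = G x1 (W (rev xr) y)" using trev Wrevxs y_def by (metis comp_apply)
      finally have "alpha x1 (W (rev (ws @ [Some i])) x) = - alpha x1 (W (rev xr) y)" by (simp add: alpha_self)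
      also have "alpha x1 (W (rev xr) y) = combo mJ y" using mJ(2) by simp
      also have "combo mJ y = (\<Sum>k\<in>UNIV. mJ k * combo (M k) x)"
        unfolding combo_def
      proof (rule sum.cong[OF HOL.refl])
        fix k
        show "mJ k * alpha k y = mJ k * (\<Sum>l\<in>UNIV. M k l * alpha l x)"
        proof (cases "k \<in> J")
          case True
          then have "alpha k y = combo (M k) x" using M y_def by (metis (mono_tags, lifting))
          then show ?thesis by (simp add: combo_def)
        next
          case False then show ?thesis using mJ(1) by simp
        qed
      qed
      also have "\<dots> = combo Mt x"
        unfolding combo_def Mt_def by (simp add: sum_distrib_left sum_distrib_right mult.assoc) (rule sum.swap)
      finally show ?thesis .
    qed
    have "neg (\<lambda>x. alpha x1 (W (rev (ws @ [Some i])) x))"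
      unfolding neg_def pos_def using key Mt0 by (intro exI[of _ Mt]) (simp add: fun_eq_iff)
    then have "L (W (ws @ [Some i]) \<circ> G x1) < L (W (ws @ [Some i]))" by (rule crit_left_neg)
    then have "\<not> L (si \<circ> G x1) > L si" using siW by simp
    then show "\<not> (\<forall>j\<in>J. L (si \<circ> G j) > L si)" using x1J by blast
  qed
  have c3: "si \<notin> min_reps cor rt Q n theta J \<longleftrightarrow> p = 0" using c3a c3b minr by blast
  define rs where "rs = tr (sj (Some i)) ws"
  obtain b cb kb where rsd: "rs = (b,cb,kb)" by (cases rs) auto
  have rsAR: "(b,cb) \<in> RP" using tr_AR[OF sj_AR, of "Some i" ws] rsd rs_def by simp
  have kb0: "kb = 0" using tr_k[OF ws(2), of i] rsd rs_def by simp
  have Qcb: "Q cb = Q (cor i)" using tr_Q[OF sj_AR, of "Some i" ws] rsd rs_def by (simp add: sj_def)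
  have phrs: "phi rs = (\<lambda>x. alpha (Some i) (W ws x))" using alpha_W_tr rs_def by simp
  have phb: "\<forall>x. phi rs x = (x + rho) \<bullet> rv b" by (simp add: rsd kb0 phi_simp)
  have pb: "p = (eta + rho) \<bullet> rv b" using p_alpha phrs phb ws(1) by (metis)
  have Ncb: "nQ Q n cb = nQ Q n (cor i)" by (rule nQ_cong[OF Qcb])
  obtain l where bl: "b = cX l" and lc: "(\<forall>k. l k \<ge> 0) \<or> (\<forall>k. l k \<le> 0)" using RP_coherent[OF rsAR] by blast
  have broot: "b \<in> roots cor rt" using rsAR by (force simp: roots_def)
  have case_pos: "pos (phi rs) \<Longrightarrow> - real (nQ Q n (cor i)) < p \<and> p \<le> 0 \<and> L sigma < L si"
  proof -
    assume ps: "pos (phi rs)"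
    have lp: "\<forall>k. l k \<ge> 0"
    proof (rule ccontr)
      assume "\<not> (\<forall>k. l k \<ge> 0)"
      then have "\<forall>k. l k \<le> 0" using lc by blast
      then have "neg (phi rs)" using pos_combo_lemma(2)[OF rsAR phb bl] by blast
      then show False using excl_AR[OF tr_AR[OF sj_AR]] ps rs_def by blast
    qed
    have "b \<in> pos_roots cor rt" unfolding pos_roots_def using broot bl lp
      by (auto intro!: exI[of _ "\<lambda>k. nat (l k)"] simp: cX_def)
    then have "- real (nQ Q n (coroot cor rt b)) < (eta + rho) \<bullet> rv b \<and> (eta + rho) \<bullet> rv b \<le> 0"
      using eta unfolding alcove_minus_def by blast
    then have A: "- real (nQ Q n (cor i)) < p \<and> p \<le> 0" using coroot_eq[OF rsAR] Ncb pb by simp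
    have "L (W ws) < L (G (Some i) \<circ> W ws)" using crit_pos ps phrs by simp
    then show ?thesis using A ws(1) si_def by simp
  qed
  have case_neg: "neg (phi rs) \<Longrightarrow> 0 \<le> p \<and> p < real (nQ Q n (cor i)) \<and> L si < L sigma"
  proof -
    assume ng: "neg (phi rs)"
    have ln: "\<forall>k. l k \<le> 0"
    proof (rule ccontr)
      assume "\<not> (\<forall>k. l k \<le> 0)"
      then have "\<forall>k. l k \<ge> 0" using lc by blast
      then have "pos (phi rs)" using pos_combo_lemma(1)[OF rsAR phb bl] by blast
      then show False using excl_AR[OF tr_AR[OF sj_AR]] ng rs_def by blast
    qed
    have h2: "(-b, -cb) \<in> RP" using RP_neg[OF rsAR] .
    have broot2: "-b \<in> roots cor rt" using h2 by (force simp: roots_def)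
    have bl2: "-b = cX (\<lambda>k. - l k)" using bl by (simp add: cX_def sum_negf vec_eq_iff)
    have "-b \<in> pos_roots cor rt" unfolding pos_roots_def using broot2 bl2 ln
      by (auto intro!: exI[of _ "\<lambda>k. nat (- l k)"] simp: cX_def)
    then have "- real (nQ Q n (coroot cor rt (-b))) < (eta + rho) \<bullet> rv (-b) \<and> (eta + rho) \<bullet> rv (-b) \<le> 0"
      using eta unfolding alcove_minus_def by blast
    then have A: "0 \<le> p \<and> p < real (nQ Q n (cor i))"
      using coroot_eq[OF h2] Ncb pb nQ_neg[of cb] by (simp add: rv_neg)
    have "L (G (Some i) \<circ> W ws) < L (W ws)" using crit_neg ng phrs by simp
    then show ?thesis using A ws(1) si_def by simp
  qed
  have cohrs: "pos (phi rs) \<or> neg (phi rs)" using coh[OF tr_AR[OF sj_AR]] rs_def by simp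
  have c1: "si \<in> min_reps cor rt Q n theta J \<and> bruhat_less cor rt Q n theta sigma si
                  \<longrightarrow> - real (nQ Q n (cor i)) < p \<and> p < 0"
  proof
    assume a: "si \<in> min_reps cor rt Q n theta J \<and> bruhat_less cor rt Q n theta sigma si"
    then have "L sigma < L si" using bruhat_len by blast
    then have "pos (phi rs)" using cohrs case_neg by fastforce
    then have "- real (nQ Q n (cor i)) < p \<and> p \<le> 0" using case_pos by blast
    moreover have "p \<noteq> 0" using c3 a by blast
    ultimately show "- real (nQ Q n (cor i)) < p \<and> p < 0" by linarith
  qed
  have c2: "si \<in> min_reps cor rt Q n theta J \<and> bruhat_less cor rt Q n theta si sigma
                  \<longrightarrow> 0 < p \<and> p < real (nQ Q n (cor i))"
  proof
    assume a: "si \<in> min_reps cor rt Q n theta J \<and> bruhat_less cor rt Q n theta si sigma"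
    then have "L si < L sigma" using bruhat_len by blast
    then have "neg (phi rs)" using cohrs case_pos by fastforce
    then have "0 \<le> p \<and> p < real (nQ Q n (cor i))" using case_neg by blast
    moreover have "p \<noteq> 0" using c3 a by blast
    ultimately show "0 < p \<and> p < real (nQ Q n (cor i))" by linarith
  qed
  have sieq: "gmult sigma (gen cor rt Q n theta (Some i)) = si" by (simp add: gmult_def si_def)
  show ?thesis unfolding Let_def sieq p_def[symmetric] using c1 c2 c3 by blast
qed

end



theorem mainTheorem4:
  fixes cor rt :: "'i::finite \<Rightarrow> int^'n"
    and Q :: "int^'n \<Rightarrow> int" and n :: nat and theta :: "int^'n"
    and eta :: "real^'n" and J :: "'i option set" and sigma :: "real^'n \<Rightarrow> real^'n"
  assumes cartan: "finite_type_cartan (\<lambda>i j. ipair (cor i) (rt j))"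
    and n_pos: "n \<ge> 1"
    and quad: "quadratic_form Q"
    and inv: "W_invariant cor rt Q"
    and sc: "simply_connected cor Q n"
    and highest: "tw_highest cor rt Q n theta"
    and eta: "eta \<in> alcove_minus cor rt Q n"
    and J: "J \<noteq> UNIV"
    and stab: "parabolic cor rt Q n theta J = stabilizer cor rt Q n theta eta"
    and sigma: "sigma \<in> Wfin cor rt Q n theta \<inter> min_reps cor rt Q n theta J"
  shows "\<forall>i. let mu = sigma eta;
               p = (mu + rhoc cor rt) \<bullet> rv (rt i);
               N = real (nQ Q n (cor i));
               si = gmult sigma (gen cor rt Q n theta (Some i))
           in (si \<in> min_reps cor rt Q n theta J \<and> bruhat_less cor rt Q n theta sigma si
                  \<longrightarrow> - N < p \<and> p < 0)
            \<and> (si \<in> min_reps cor rt Q n theta J \<and> bruhat_less cor rt Q n theta si sigma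
                  \<longrightarrow> 0 < p \<and> p < N)
            \<and> (si \<notin> min_reps cor rt Q n theta J \<longleftrightarrow> p = 0)"
proof -
  note cd = cartan[unfolded finite_type_cartan_def]
  have d1: "\<forall>i. ipair (cor i) (rt i) = 2" using cd by (rule conjunct1)
  have d2: "\<forall>i j. i \<noteq> j \<longrightarrow> ipair (cor i) (rt j) \<le> 0" using cd[THEN conjunct2] by (rule conjunct1)
  have d3: "\<forall>i j. (ipair (cor i) (rt j) = 0) = (ipair (cor j) (rt i) = 0)"
    using cd[THEN conjunct2, THEN conjunct2] by (rule conjunct1)
  obtain d :: "'i \<Rightarrow> real" where dd: "(\<forall>i. 0 < d i) \<and>
        (\<forall>i j. d i * real_of_int (ipair (cor i) (rt j)) = d j * real_of_int (ipair (cor j) (rt i))) \<and>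
        (\<forall>x. x \<noteq> (\<lambda>_. 0) \<longrightarrow>
             0 < (\<Sum>i\<in>UNIV. \<Sum>j\<in>UNIV. x i * d i * real_of_int (ipair (cor i) (rt j)) * x j))"
    using cd[THEN conjunct2, THEN conjunct2, THEN conjunct2] by (rule exE)
  have n1: "1 \<le> n" using n_pos .
  have dd1: "\<forall>i. 0 < d i" using dd by (rule conjunct1)
  have dd2: "\<forall>i j. d i * real_of_int (ipair (cor i) (rt j)) = d j * real_of_int (ipair (cor j) (rt i))"
    using dd[THEN conjunct2] by (rule conjunct1)
  have dd3: "\<forall>x. x \<noteq> (\<lambda>_. 0) \<longrightarrow>
             0 < (\<Sum>i\<in>UNIV. \<Sum>j\<in>UNIV. x i * d i * real_of_int (ipair (cor i) (rt j)) * x j)"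
    using dd[THEN conjunct2] by (rule conjunct2)
  have R0: "rd cor rt Q n theta d"
    unfolding rd_def using dd1 dd2 dd3 d1 d2 d3 n1 quad inv highest by (intro conjI) assumption+
  interpret R: rd cor rt Q n theta d by (rule R0)
  show ?thesis by (intro allI) (rule R.main[OF eta stab sigma])
qed


end
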